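(* Let $k$ be a field and $Q,q\in k^\times$. Let $\mathcal P_{Q,q}=\bigoplus_{d\ge0}\mathcal P^d_{Q,q}$ and $\mathcal{AP}_q=\bigoplus_{d\ge0}\mathcal{AP}^d_q$ with the monoidal structure described below. Then $\mathcal{AP}_q$ acts on $\mathcal P_{Q,q}$ from the right via the functor $*$ described below (with the structure morphisms $\lambda$ and $\rho$ being identities on objects), i.e. $(\mathcal P_{Q,q},\mathcal{AP}_q,* )$ is an action pair.
   Context: Hecke algebras: $\mathcal H^B_{Q,q}(d)$ is generated by $T_0,\dots,T_{d-1}$ with relations $(T_0+Q)(T_0-Q^{-1})=0$; $(T_i+q)(T_i-q^{-1})=0$ ($i>0$); $T_iT_{i+1}T_i=T_{i+1}T_iT_{i+1}$ ($i>0$); $T_0T_1T_0T_1=T_1T_0T_1T_0$; $T_iT_j=T_jT_i$ ($|i-j|>1$). Its subalgebra generated by $T_1,\dots,T_{d-1}$ is the type A Hecke algebra $\mathcal H^A_q(d)$. For $n=2s$ let $\mathbb I_n=\{-\tfrac{2s-1}{2},\dots,\tfrac{2s-1}{2}\}$ (half-integers) and for $n=2s+1$ let $\mathbb I_n=\{-s,\dots,s\}$; $V_n$ has basis $\{v_i:i\in\mathbb I_n\}$. $R_q(v_i\otimes v_j)=q^{-1}v_i\otimes v_j$ if $i=j$, $v_j\otimes v_i$ if $i<j$, $v_j\otimes v_i+(q^{-1}-q)v_i\otimes v_j$ if $i>j$; $K_Q(v_i)=Q^{-1}v_i$ if $i=0$, $v_{-i}$ if $i>0$, $v_{-i}+(Q^{-1}-Q)v_i$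 if $i<0$. $\mathcal H^B_{Q,q}(d)$ acts on $V_n^{\otimes d}$ from the right: $T_i$ ($i>0$) by $R_q$ on factors $i,i+1$, $T_0$ by $K_Q$ on the first factor. Categories: $\mathcal C^B_d$ (resp. $\mathcal C^A_d$) has objects $V_n$, $n\ge1$, and morphisms $\mathrm{Hom}_{\mathcal H^B_{Q,q}(d)}(V_n^{\otimes d},V_m^{\otimes d})$ (resp. $\mathrm{Hom}_{\mathcal H^A_q(d)}(V_n^{\otimes d},V_m^{\otimes d})$); $\mathcal P^d_{Q,q}$ (resp. $\mathcal{AP}^d_q$) is the category of $k$-linear functors from $\mathcal C^B_d$ (resp. $\mathcal C^A_d$) to finite-dimensional vector spaces. Monoidal structure on $\mathcal{AP}_q$: for $F\in\mathcal{AP}^d_q$, $G\in\mathcal{AP}^e_q$, $(F\otimes G)(V_n)=F(V_n)\otimes G(V_n)$, and on morphisms $F\otimes G$ is the composite $\mathrm{Hom}_{\mathcal H^A_q(d+e)}(V_n^{\otimes d+e},V_m^{\otimes d+e})\to\mathrm{Hom}_{\mathcal H^A_q(d)\otimes\mathcal H^A_q(e)}(V_n^{\otimes d}\otimes V_n^{\otimes e},V_m^{\otimes d}\otimes V_m^{\otimes e})\cong\mathrm{Hom}_{\mathcal H^A_q(d)}(V_n^{\otimes d},V_m^{\otimes d})\otimes\mathrm{Hom}_{\mathcal H^A_q(e)}(V_n^{\otimes e},V_m^{\otimes e})\to\mathrm{Hom}(F(V_n),F(V_m))\otimes\mathrm{Hom}(G(V_n),G(V_m))\to\mathrm{Hom}((F\otimes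 G)(V_n),(F\otimes G)(V_m))$; the unit is the degree-0 functor with value $k$. The action: for $G\in\mathcal P^e_{Q,q}$ and $F\in\mathcal{AP}^d_q$, $G*F\in\mathcal P^{e+d}_{Q,q}$ has $(G*F)(V_n)=G(V_n)\otimes F(V_n)$, and on morphisms the analogous composite through $\mathrm{Hom}_{\mathcal H^B_{Q,q}(e)\otimes\mathcal H^A_q(d)}$, using $\mathcal H^B_{Q,q}(e)\otimes\mathcal H^A_q(d)\subseteq\mathcal H^B_{Q,q}(e+d)$ (the second factor generated by $T_{e+1},\dots,T_{e+d-1}$); on natural transformations, $(f*g)_{V_n}=f_{V_n}\otimes g_{V_n}$. Action pair: for a category $\mathcal B$ and monoidal category $(\mathcal A,\otimes,1_{\mathcal A})$ with associator $a$ and left unitor $l$, a right action is a functor $*:\mathcal B\times\mathcal A\to\mathcal B$ with (1) $(f_1*g_1)(f_2*g_2)=(f_1f_2)*(g_1g_2)$ whenever defined; (2) a natural morphism $\lambda_{Y,X_1,X_2}:Y*(X_1\otimes X_2)\to(Y*X_1)*X_2$ with $(\lambda_{Y,X_1,X_2}*\mathrm{id}_{X_3})\circ\lambda_{Y,X_1\otimes X_2,X_3}=\lambda_{Y*X_1,X_2,X_3}\circ\lambda_{Y,X_1,X_2\otimes X_3}\circ(\mathrm{id}_Y*a_{X_1,X_2,X_3})$; (3) a natural isomorphism $\rho_Y:Y*1_{\mathcal A}\to Y$ with $(\rho_Y*\mathrm{id}_X)\circ\lambda_{Y,1,X}=\mathrm{id}_Y*l_X$. *)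

theory Defs
  imports Main "HOL.Rat"
begin

text \<open>A basis vector of V_n^{\<otimes>d} is a word (list) of length d over the index set I_n.
  Linear maps V_n^{\<otimes>d} \<rightarrow> V_m^{\<otimes>d} are matrices indexed by words
  (entry (u,w) = coefficient of v_u in the image of v_w), supported on the relevant words.\<close>

type_synonym 'k wmat = "rat list \<Rightarrow> rat list \<Rightarrow> 'k"
type_synonym 'k nmat = "nat \<Rightarrow> nat \<Rightarrow> 'k"

definition idx :: "nat \<Rightarrow> rat set" where
  "idx n = {of_int j - (of_nat n - 1) / 2 | j. 0 \<le> j \<and> j < int n}"

definition words :: "nat \<Rightarrow> nat \<Rightarrow> rat list set" where
  "words n d = {w. length w = d \<and> set w \<subseteq> idx n}"

definition wmul :: "rat list set \<Rightarrow> 'k::field wmat \<Rightarrow> 'k wmat \<Rightarrow> 'k wmat" where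
  "wmul S f g = (\<lambda>u w. \<Sum>v\<in>S. f u v * g v w)"

definition wmat_on :: "nat \<Rightarrow> nat \<Rightarrow> nat \<Rightarrow> 'k::field wmat \<Rightarrow> bool" where
  "wmat_on m n d f \<longleftrightarrow> (\<forall>u w. f u w \<noteq> 0 \<longrightarrow> u \<in> words m d \<and> w \<in> words n d)"

definition wid :: "nat \<Rightarrow> nat \<Rightarrow> 'k::field wmat" where
  "wid n d = (\<lambda>u w. if u = w \<and> w \<in> words n d then 1 else 0)"

text \<open>R_q acting on tensor factors i, i+1 (1-based), i.e. list positions i-1, i.\<close>
definition Rcoef :: "'k::field \<Rightarrow> nat \<Rightarrow> 'k wmat" where
  "Rcoef q i u w = (let a = w ! (i - 1); b = w ! i in
     (if a \<noteq> b \<and> u = w[i - 1 := b, i := a] then 1 else 0)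
     + (if u = w then (if a = b then inverse q else if b < a then inverse q - q else 0) else 0))"

definition Kcoef :: "'k::field \<Rightarrow> 'k wmat" where
  "Kcoef Q u w = (let a = w ! 0 in
     (if a \<noteq> 0 \<and> u = w[0 := - a] then 1 else 0)
     + (if u = w then (if a = 0 then inverse Q else if a < 0 then inverse Q - Q else 0) else 0))"

definition Tgen :: "'k::field \<Rightarrow> 'k \<Rightarrow> nat \<Rightarrow> nat \<Rightarrow> nat \<Rightarrow> 'k wmat" where
  "Tgen Q q n d j = (\<lambda>u w. if u \<in> words n d \<and> w \<in> words n d
       then (if j = 0 then Kcoef Q u w else Rcoef q j u w) else 0)"

text \<open>Linear maps commuting with the generators T_j, j \<in> J (= module homomorphisms
  for the subalgebra generated by these T_j).\<close>
definition HomJ :: "'k::field \<Rightarrow> 'k \<Rightarrow> nat \<Rightarrow> nat set \<Rightarrow> nat \<Rightarrow> nat \<Rightarrow> 'k wmat set" where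
  "HomJ Q q d J n m = {f. wmat_on m n d f \<and>
     (\<forall>j\<in>J. wmul (words n d) f (Tgen Q q n d j) = wmul (words m d) (Tgen Q q m d j) f)}"

text \<open>Hom_{H^B_{Q,q}(d)}(V_n^{\<otimes>d}, V_m^{\<otimes>d}) and Hom_{H^A_q(d)}(V_n^{\<otimes>d}, V_m^{\<otimes>d}).\<close>
definition HomB :: "'k::field \<Rightarrow> 'k \<Rightarrow> nat \<Rightarrow> nat \<Rightarrow> nat \<Rightarrow> 'k wmat set" where
  "HomB Q q d = HomJ Q q d {0..<d}"

definition HomA :: "'k::field \<Rightarrow> nat \<Rightarrow> nat \<Rightarrow> nat \<Rightarrow> 'k wmat set" where
  "HomA q d = HomJ 1 q d {1..<d}"  (* Q is irrelevant: T_0 is not used *)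

definition nmat_on :: "nat \<Rightarrow> nat \<Rightarrow> 'k::field nmat \<Rightarrow> bool" where
  "nmat_on r c A \<longleftrightarrow> (\<forall>i j. A i j \<noteq> 0 \<longrightarrow> i < r \<and> j < c)"

definition nmul :: "nat \<Rightarrow> 'k::field nmat \<Rightarrow> 'k nmat \<Rightarrow> 'k nmat" where
  "nmul N A B = (\<lambda>i j. \<Sum>l<N. A i l * B l j)"

definition nid :: "nat \<Rightarrow> 'k::field nmat" where
  "nid N = (\<lambda>i j. if i = j \<and> i < N then 1 else 0)"

text \<open>Kronecker product; rB, cB are the numbers of rows and columns of B.\<close>
definition nkron :: "nat \<Rightarrow> nat \<Rightarrow> 'k::field nmat \<Rightarrow> 'k nmat \<Rightarrow> 'k nmat" where
  "nkron rB cB A B = (\<lambda>r c. A (r div rB) (c div cB) * B (r mod rB) (c mod cB))"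

text \<open>Identification V^{\<otimes>d1} \<otimes> V^{\<otimes>d2} = V^{\<otimes>(d1+d2)} by concatenation of words.\<close>
definition wkron :: "nat \<Rightarrow> 'k::field wmat \<Rightarrow> 'k wmat \<Rightarrow> 'k wmat" where
  "wkron d1 a b = (\<lambda>u w. a (take d1 u) (take d1 w) * b (drop d1 u) (drop d1 w))"

record 'k fctr =
  fdim :: "nat \<Rightarrow> nat"
  fmor :: "nat \<Rightarrow> nat \<Rightarrow> 'k wmat \<Rightarrow> 'k nmat"

text \<open>k-linear functor from the category with objects V_n (n \<ge> 1) and hom spaces H n m
  (of degree d) to finite-dimensional vector spaces.\<close>
definition is_functor :: "nat \<Rightarrow> (nat \<Rightarrow> nat \<Rightarrow> 'k::field wmat set) \<Rightarrow> 'k fctr \<Rightarrow> bool" where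
  "is_functor d H F \<longleftrightarrow>
    (\<forall>n m f. 1 \<le> n \<longrightarrow> 1 \<le> m \<longrightarrow> f \<in> H n m \<longrightarrow>
       nmat_on (fdim F m) (fdim F n) (fmor F n m f)) \<and>
    (\<forall>n m f g c. 1 \<le> n \<longrightarrow> 1 \<le> m \<longrightarrow> f \<in> H n m \<longrightarrow> g \<in> H n m \<longrightarrow>
       fmor F n m (\<lambda>u w. f u w + g u w) = (\<lambda>i j. fmor F n m f i j + fmor F n m g i j) \<and>
       fmor F n m (\<lambda>u w. c * f u w) = (\<lambda>i j. c * fmor F n m f i j)) \<and>
    (\<forall>n. 1 \<le> n \<longrightarrow> fmor F n n (wid n d) = nid (fdim F n)) \<and>
    (\<forall>n m p f g. 1 \<le> n \<longrightarrow> 1 \<le> m \<longrightarrow> 1 \<le> p \<longrightarrow> f \<in> H n m \<longrightarrow> g \<in> H m p \<longrightarrow>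
       fmor F n p (wmul (words m d) g f) = nmul (fdim F m) (fmor F m p g) (fmor F n m f))"

definition Pobj :: "'k::field \<Rightarrow> 'k \<Rightarrow> nat \<Rightarrow> 'k fctr \<Rightarrow> bool" where
  "Pobj Q q d F \<longleftrightarrow> is_functor d (HomB Q q d) F"

definition APobj :: "'k::field \<Rightarrow> nat \<Rightarrow> 'k fctr \<Rightarrow> bool" where
  "APobj q d F \<longleftrightarrow> is_functor d (HomA q d) F"

definition nat_trans :: "(nat \<Rightarrow> nat \<Rightarrow> 'k::field wmat set) \<Rightarrow> 'k fctr \<Rightarrow> 'k fctr
    \<Rightarrow> (nat \<Rightarrow> 'k nmat) \<Rightarrow> bool" where
  "nat_trans H F G eta \<longleftrightarrow>
    (\<forall>n. 1 \<le> n \<longrightarrow> nmat_on (fdim G n) (fdim F n) (eta n)) \<and>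
    (\<forall>n m f. 1 \<le> n \<longrightarrow> 1 \<le> m \<longrightarrow> f \<in> H n m \<longrightarrow>
       nmul (fdim G n) (fmor G n m f) (eta n) = nmul (fdim F m) (eta m) (fmor F n m f))"

text \<open>Vertical composition eta \<circ> theta, where F is the middle functor; identities.\<close>
definition ntcomp :: "'k::field fctr \<Rightarrow> (nat \<Rightarrow> 'k nmat) \<Rightarrow> (nat \<Rightarrow> 'k nmat) \<Rightarrow> nat \<Rightarrow> 'k nmat" where
  "ntcomp F eta theta = (\<lambda>n. nmul (fdim F n) (eta n) (theta n))"

definition ntid :: "'k::field fctr \<Rightarrow> nat \<Rightarrow> 'k nmat" where
  "ntid F = (\<lambda>n. nid (fdim F n))"

text \<open>(eta * theta)_{V_n} = eta_{V_n} \<otimes> theta_{V_n}, where theta : F \<Rightarrow> F'.\<close>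
definition nt_kron :: "'k::field fctr \<Rightarrow> 'k fctr \<Rightarrow> (nat \<Rightarrow> 'k nmat) \<Rightarrow> (nat \<Rightarrow> 'k nmat) \<Rightarrow> nat \<Rightarrow> 'k nmat" where
  "nt_kron F' F eta theta = (\<lambda>n. nkron (fdim F' n) (fdim F n) (eta n) (theta n))"

definition feq :: "(nat \<Rightarrow> nat \<Rightarrow> 'k::field wmat set) \<Rightarrow> 'k fctr \<Rightarrow> 'k fctr \<Rightarrow> bool" where
  "feq H F G \<longleftrightarrow> (\<forall>n. 1 \<le> n \<longrightarrow> fdim F n = fdim G n) \<and>
     (\<forall>n m f. 1 \<le> n \<longrightarrow> 1 \<le> m \<longrightarrow> f \<in> H n m \<longrightarrow> fmor F n m f = fmor G n m f)"

text \<open>On a morphism phi (in the hom space of degree d1+d2), write phi = \<Sum> a_i \<otimes> b_i with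
  a_i \<in> H1, b_i \<in> H2 (the isomorphism Hom_{H1 \<otimes> H2} \<cong> Hom_{H1} \<otimes> Hom_{H2}) and send it to
  \<Sum> F1(a_i) \<otimes> F2(b_i).\<close>
definition prod_fun :: "nat \<Rightarrow> (nat \<Rightarrow> nat \<Rightarrow> 'k::field wmat set) \<Rightarrow> (nat \<Rightarrow> nat \<Rightarrow> 'k wmat set)
    \<Rightarrow> 'k fctr \<Rightarrow> 'k fctr \<Rightarrow> 'k fctr" where
  "prod_fun d1 H1 H2 F1 F2 =
    \<lparr> fdim = (\<lambda>n. fdim F1 n * fdim F2 n),
      fmor = (\<lambda>n m phi. THE M. \<exists>ps. (\<forall>p\<in>set ps. fst p \<in> H1 n m \<and> snd p \<in> H2 n m) \<and>
         phi = (\<lambda>u w. \<Sum>p\<leftarrow>ps. wkron d1 (fst p) (snd p) u w) \<and>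
         M = (\<lambda>i j. \<Sum>p\<leftarrow>ps. nkron (fdim F2 m) (fdim F2 n)
                      (fmor F1 n m (fst p)) (fmor F2 n m (snd p)) i j)) \<rparr>"

definition tensorA :: "'k::field \<Rightarrow> nat \<Rightarrow> nat \<Rightarrow> 'k fctr \<Rightarrow> 'k fctr \<Rightarrow> 'k fctr" where
  "tensorA q d e F G = prod_fun d (HomA q d) (HomA q e) F G"

definition unitA :: "'k::field fctr" where
  "unitA = \<lparr> fdim = (\<lambda>n. 1), fmor = (\<lambda>n m c. (\<lambda>i j. if i = 0 \<and> j = 0 then c [] [] else 0)) \<rparr>"

definition starBA :: "'k::field \<Rightarrow> 'k \<Rightarrow> nat \<Rightarrow> nat \<Rightarrow> 'k fctr \<Rightarrow> 'k fctr \<Rightarrow> 'k fctr" where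
  "starBA Q q e d G F = prod_fun e (HomB Q q e) (HomA q d) G F"

end

theory Submission
  imports Defs
begin

lemma finite_idx: "finite (idx n)"
proof -
  have "idx n = (\<lambda>j. of_int j - (of_nat n - 1) / 2) ` {0..<int n}"
    unfolding idx_def by auto
  thus ?thesis by simp
qed

lemma finite_words: "finite (words n d)"
  unfolding words_def using finite_lists_length_eq[OF finite_idx] by (simp add: conj_commute)

lemma words_append_iff:
  "length x = d1 \<Longrightarrow> (x @ u \<in> words n (d1 + d2)) = (x \<in> words n d1 \<and> u \<in> words n d2)"
  unfolding words_def by auto

lemma words_take_drop:
  "(w \<in> words n (e + d)) = (take e w \<in> words n e \<and> drop e w \<in> words n d)"
proof
  assume "w \<in> words n (e + d)"
  thus "take e w \<in> words n e \<and> drop e w \<in> words n d"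
    unfolding words_def by (auto dest: in_set_takeD in_set_dropD)
next
  assume a: "take e w \<in> words n e \<and> drop e w \<in> words n d"
  have "w = take e w @ drop e w" by simp
  hence "set w = set (take e w) \<union> set (drop e w)" by (metis set_append)
  with a show "w \<in> words n (e + d)" unfolding words_def
    by (metis (mono_tags, lifting) Un_subset_iff length_append append_take_drop_id mem_Collect_eq)
qed

lemma words_len: "w \<in> words n d \<Longrightarrow> length w = d"
  unfolding words_def by auto

lemma sum_words_split:
  "(\<Sum>v\<in>words n (d1 + d2). g v) = (\<Sum>y\<in>words n d1. \<Sum>z\<in>words n d2. g (y @ z))"
proof -
  have bij: "bij_betw (\<lambda>(y, z). y @ z) (words n d1 \<times> words n d2) (words n (d1 + d2))"
  proof (rule bij_betw_imageI)
    show "inj_on (\<lambda>(y, z). y @ z) (words n d1 \<times> words n d2)"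
      by (auto simp: inj_on_def words_def)
    show "(\<lambda>(y, z). y @ z) ` (words n d1 \<times> words n d2) = words n (d1 + d2)"
    proof
      show "(\<lambda>(y, z). y @ z) ` (words n d1 \<times> words n d2) \<subseteq> words n (d1 + d2)"
        by (auto simp: words_def)
      show "words n (d1 + d2) \<subseteq> (\<lambda>(y, z). y @ z) ` (words n d1 \<times> words n d2)"
      proof
        fix v assume "v \<in> words n (d1 + d2)"
        hence "take d1 v \<in> words n d1" "drop d1 v \<in> words n d2" using words_take_drop by auto
        thus "v \<in> (\<lambda>(y, z). y @ z) ` (words n d1 \<times> words n d2)"
          by (intro image_eqI[of _ _ "(take d1 v, drop d1 v)"]) auto
      qed
    qed
  qed
  have "(\<Sum>v\<in>words n (d1 + d2). g v) = (\<Sum>p\<in>words n d1 \<times> words n d2. g (fst p @ snd p))"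
    using sum.reindex_bij_betw[OF bij, of g] by (simp add: split_def)
  also have "\<dots> = (\<Sum>y\<in>words n d1. \<Sum>z\<in>words n d2. g (y @ z))"
    by (simp add: sum.cartesian_product split_def)
  finally show ?thesis .
qed

lemma wmul_assoc: "wmul S (wmul S' f g) h = wmul S' f (wmul S g h)"
  unfolding wmul_def
  by (auto intro!: ext simp: sum_distrib_left sum_distrib_right mult.assoc intro: sum.swap)

lemma wmul_add_left: "wmul S (\<lambda>u w. f u w + c * g u w) h = (\<lambda>u w. wmul S f h u w + c * wmul S g h u w)"
  unfolding wmul_def by (auto intro!: ext simp: sum.distrib sum_distrib_left algebra_simps)

lemma wmul_add_right: "wmul S h (\<lambda>u w. f u w + c * g u w) = (\<lambda>u w. wmul S h f u w + c * wmul S h g u w)"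
  unfolding wmul_def by (auto intro!: ext simp: sum.distrib sum_distrib_left algebra_simps)

lemma wmul_smult_left: "wmul S (\<lambda>u w. c * f u w) h = (\<lambda>u w. c * wmul S f h u w)"
  unfolding wmul_def by (auto intro!: ext simp: sum_distrib_left algebra_simps)

lemma wmul_smult_right: "wmul S h (\<lambda>u w. c * f u w) = (\<lambda>u w. c * wmul S h f u w)"
  unfolding wmul_def by (auto intro!: ext simp: sum_distrib_left algebra_simps)

lemma wmul_zero_left: "wmul S (\<lambda>u w. 0) h = (\<lambda>u w. 0)"
  unfolding wmul_def by simp

lemma wmul_zero_right: "wmul S h (\<lambda>u w. 0) = (\<lambda>u w. 0)"
  unfolding wmul_def by simp

lemma HomJ_on: "f \<in> HomJ Q q d J n m \<Longrightarrow> f u w \<noteq> 0 \<Longrightarrow> u \<in> words m d \<and> w \<in> words n d"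
  unfolding HomJ_def wmat_on_def by blast

lemma HomJ_zero: "(\<lambda>u w. 0) \<in> HomJ Q q d J n m"
  unfolding HomJ_def wmat_on_def by (simp add: wmul_zero_left wmul_zero_right)

lemma HomJ_lin: "f \<in> HomJ Q q d J n m \<Longrightarrow> g \<in> HomJ Q q d J n m \<Longrightarrow>
   (\<lambda>u w. f u w + c * g u w) \<in> HomJ Q q d J n m"
  unfolding HomJ_def wmat_on_def
  by (auto simp: wmul_add_left wmul_add_right) (metis mult_zero_right add_0)+

lemma HomJ_smult: "f \<in> HomJ Q q d J n m \<Longrightarrow> (\<lambda>u w. c * f u w) \<in> HomJ Q q d J n m"
  using HomJ_lin[OF HomJ_zero, of f] by simp

lemma HomJ_add: "f \<in> HomJ Q q d J n m \<Longrightarrow> g \<in> HomJ Q q d J n m \<Longrightarrow>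
   (\<lambda>u w. f u w + g u w) \<in> HomJ Q q d J n m"
  using HomJ_lin[of f Q q d J n m g 1] by simp

lemma wmat_on_wmul: "wmat_on p m d g \<Longrightarrow> wmat_on m n d f \<Longrightarrow> wmat_on p n d (wmul S g f)"
  unfolding wmat_on_def wmul_def
  by (metis (no_types, lifting) mult_not_zero sum.neutral)

lemma HomJ_comp: "f \<in> HomJ Q q d J n m \<Longrightarrow> g \<in> HomJ Q q d J m p \<Longrightarrow>
   wmul (words m d) g f \<in> HomJ Q q d J n p"
proof -
  assume f: "f \<in> HomJ Q q d J n m" and g: "g \<in> HomJ Q q d J m p"
  have on: "wmat_on p n d (wmul (words m d) g f)"
    using f g unfolding HomJ_def by (auto intro: wmat_on_wmul)
  have "wmul (words n d) (wmul (words m d) g f) (Tgen Q q n d j)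
      = wmul (words p d) (Tgen Q q p d j) (wmul (words m d) g f)" if j: "j \<in> J" for j
  proof -
    have cf: "wmul (words n d) f (Tgen Q q n d j) = wmul (words m d) (Tgen Q q m d j) f"
      using f j unfolding HomJ_def by auto
    have cg: "wmul (words m d) g (Tgen Q q m d j) = wmul (words p d) (Tgen Q q p d j) g"
      using g j unfolding HomJ_def by auto
    have "wmul (words n d) (wmul (words m d) g f) (Tgen Q q n d j)
        = wmul (words m d) g (wmul (words m d) (Tgen Q q m d j) f)"
      by (simp add: wmul_assoc cf)
    also have "\<dots> = wmul (words m d) (wmul (words m d) g (Tgen Q q m d j)) f"
      by (simp add: wmul_assoc)
    also have "\<dots> = wmul (words p d) (Tgen Q q p d j) (wmul (words m d) g f)"
      by (simp add: cg wmul_assoc)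
    finally show ?thesis .
  qed
  with on show ?thesis unfolding HomJ_def by auto
qed

lemma Tgen_on: "Tgen Q q n d j u w \<noteq> 0 \<Longrightarrow> u \<in> words n d \<and> w \<in> words n d"
  unfolding Tgen_def by (auto split: if_splits)

lemma wid_wmul_left: "wmat_on n k d f \<Longrightarrow> wmul (words n d) (wid n d) f = f"
proof (intro ext)
  fix u w assume on: "wmat_on n k d f"
  have "wmul (words n d) (wid n d) f u w = (\<Sum>v\<in>words n d. if v = u then (if u \<in> words n d then f v w else 0) else 0)"
    unfolding wmul_def wid_def by (auto intro!: sum.cong)
  also have "\<dots> = (if u \<in> words n d then f u w else 0)"
    by (simp add: sum.delta' finite_words)
  also have "\<dots> = f u w" using on unfolding wmat_on_def by auto
  finally show "wmul (words n d) (wid n d) f u w = f u w" .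
qed

lemma wid_wmul_right: "wmat_on k n d f \<Longrightarrow> wmul (words n d) f (wid n d) = f"
proof (intro ext)
  fix u w assume on: "wmat_on k n d f"
  have "wmul (words n d) f (wid n d) u w = (\<Sum>v\<in>words n d. if v = w then (if w \<in> words n d then f u v else 0) else 0)"
    unfolding wmul_def wid_def by (auto intro!: sum.cong)
  also have "\<dots> = (if w \<in> words n d then f u w else 0)"
    by (simp add: sum.delta' finite_words)
  also have "\<dots> = f u w" using on unfolding wmat_on_def by auto
  finally show "wmul (words n d) f (wid n d) u w = f u w" .
qed

lemma Tgen_wmat_on: "wmat_on n n d (Tgen Q q n d j)"
  using Tgen_on unfolding wmat_on_def by blast

lemma wid_on: "wmat_on n n d (wid n d)"
  unfolding wmat_on_def wid_def by auto

lemma wid_HomJ: "wid n d \<in> HomJ Q q d J n n"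
  unfolding HomJ_def mem_Collect_eq
  apply (rule conjI)
   apply (rule wid_on)
  apply (intro ballI)
  apply (subst wid_wmul_left[OF Tgen_wmat_on])
  apply (subst wid_wmul_right[OF Tgen_wmat_on])
  apply (rule refl)
  done

lemma app_eq_iff: "length x = length y \<Longrightarrow> (x @ u = y @ w) = (x = y \<and> u = w)"
  by simp

lemma Kcoef_app: "length x = d1 \<Longrightarrow> length y = d1 \<Longrightarrow> 0 < d1 \<Longrightarrow>
  Kcoef Q (x @ u) (y @ w) = Kcoef Q x y * (if u = w then 1 else 0)"
  unfolding Kcoef_def Let_def
  by (simp add: nth_append list_update_append)

lemma Rcoef_app1: "length x = d1 \<Longrightarrow> length y = d1 \<Longrightarrow> 1 \<le> j \<Longrightarrow> j < d1 \<Longrightarrow>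
  Rcoef q j (x @ u) (y @ w) = Rcoef q j x y * (if u = w then 1 else 0)"
proof -
  assume a: "length x = d1" "length y = d1" "1 \<le> j" "j < d1"
  then obtain k where j: "j = Suc k" by (cases j) auto
  have e1: "j - 1 = k" using j by simp
  have n1: "(y @ w) ! k = y ! k" "(y @ w) ! j = y ! j"
    using a j by (simp_all add: nth_append)
  have up: "(y @ w)[k := b, j := c] = y[k := b, j := c] @ w" for b c
    using a j by (simp add: list_update_append)
  have eq: "(x @ u = v @ w) = (x = v \<and> u = w)" if "length v = d1" for v using a that by simp
  show ?thesis
    unfolding Rcoef_def Let_def e1 n1 up using a
    by (auto simp: eq)
qed

lemma Rcoef_app2: "length x = d1 \<Longrightarrow> length y = d1 \<Longrightarrow> 1 \<le> j \<Longrightarrow>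
  Rcoef q (d1 + j) (x @ u) (y @ w) = (if x = y then 1 else 0) * Rcoef q j u w"
proof -
  assume a: "length x = d1" "length y = d1" "1 \<le> j"
  then obtain k where j: "j = Suc k" by (cases j) auto
  have e1: "d1 + Suc k - 1 = d1 + k" "d1 + Suc k = Suc (d1 + k)" "Suc k - 1 = k" by simp_all
  have n1: "(y @ w) ! (d1 + k) = w ! k" "(y @ w) ! Suc (d1 + k) = w ! Suc k"
    using a by (simp_all add: nth_append)
  have up: "(y @ w)[d1 + k := b, Suc (d1 + k) := c] = y @ w[k := b, Suc k := c]" for b c
    using a by (simp add: list_update_append)
  have eq: "(x @ u = y @ v) = (x = y \<and> u = v)" for v using a by simp
  show ?thesis
    unfolding j unfolding Rcoef_def Let_def e1
    by (auto simp: n1 up eq)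
qed

lemma Tgen_app1: "length x = d1 \<Longrightarrow> length y = d1 \<Longrightarrow> j < d1 \<Longrightarrow>
  Tgen Q q n (d1 + d2) j (x @ u) (y @ w) = Tgen Q q n d1 j x y * (if u = w \<and> w \<in> words n d2 then 1 else 0)"
  unfolding Tgen_def
  by (auto simp: words_append_iff Kcoef_app Rcoef_app1)

lemma Tgen_app2: "length x = d1 \<Longrightarrow> length y = d1 \<Longrightarrow> 1 \<le> j \<Longrightarrow>
  Tgen Q q n (d1 + d2) (d1 + j) (x @ u) (y @ w) = (if x = y \<and> y \<in> words n d1 then 1 else 0) * Tgen Q q n d2 j u w"
  unfolding Tgen_def
  by (auto simp: words_append_iff Rcoef_app2)

lemma wmul_T1_right:
  assumes "length x = d1" "y \<in> words n d1" "w \<in> words n d2" "j < d1"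
  shows "wmul (words n (d1 + d2)) phi (Tgen Q q n (d1 + d2) j) (x @ u) (y @ w)
       = (\<Sum>y'\<in>words n d1. phi (x @ u) (y' @ w) * Tgen Q q n d1 j y' y)"
proof -
  have ly: "length y = d1" using assms words_len by blast
  have "wmul (words n (d1 + d2)) phi (Tgen Q q n (d1 + d2) j) (x @ u) (y @ w)
      = (\<Sum>y'\<in>words n d1. \<Sum>z\<in>words n d2. phi (x @ u) (y' @ z) * Tgen Q q n (d1 + d2) j (y' @ z) (y @ w))"
    unfolding wmul_def sum_words_split ..
  also have "\<dots> = (\<Sum>y'\<in>words n d1. \<Sum>z\<in>words n d2. if z = w then phi (x @ u) (y' @ w) * Tgen Q q n d1 j y' y else 0)"
    using assms ly by (intro sum.cong refl) (auto simp: Tgen_app1 words_len)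
  also have "\<dots> = (\<Sum>y'\<in>words n d1. phi (x @ u) (y' @ w) * Tgen Q q n d1 j y' y)"
    using assms by (simp add: sum.delta' finite_words)
  finally show ?thesis .
qed

lemma wmul_T1_left:
  assumes "x \<in> words m d1" "u \<in> words m d2" "length y = d1" "j < d1"
  shows "wmul (words m (d1 + d2)) (Tgen Q q m (d1 + d2) j) phi (x @ u) (y @ w)
       = (\<Sum>x'\<in>words m d1. Tgen Q q m d1 j x x' * phi (x' @ u) (y @ w))"
proof -
  have lx: "length x = d1" using assms words_len by blast
  have "wmul (words m (d1 + d2)) (Tgen Q q m (d1 + d2) j) phi (x @ u) (y @ w)
      = (\<Sum>x'\<in>words m d1. \<Sum>z\<in>words m d2. Tgen Q q m (d1 + d2) j (x @ u) (x' @ z) * phi (x' @ z) (y @ w))"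
    unfolding wmul_def sum_words_split ..
  also have "\<dots> = (\<Sum>x'\<in>words m d1. \<Sum>z\<in>words m d2. if z = u then Tgen Q q m d1 j x x' * phi (x' @ u) (y @ w) else 0)"
    using assms lx by (intro sum.cong refl) (auto simp: Tgen_app1 words_len)
  also have "\<dots> = (\<Sum>x'\<in>words m d1. Tgen Q q m d1 j x x' * phi (x' @ u) (y @ w))"
    using assms by (simp add: sum.delta' finite_words)
  finally show ?thesis .
qed

lemma wmul_T2_right:
  assumes "length x = d1" "y \<in> words n d1" "1 \<le> j"
  shows "wmul (words n (d1 + d2)) phi (Tgen Q q n (d1 + d2) (d1 + j)) (x @ u) (y @ w)
       = (\<Sum>w'\<in>words n d2. phi (x @ u) (y @ w') * Tgen Q q n d2 j w' w)"
proof -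
  have ly: "length y = d1" using assms words_len by blast
  have "wmul (words n (d1 + d2)) phi (Tgen Q q n (d1 + d2) (d1 + j)) (x @ u) (y @ w)
      = (\<Sum>y'\<in>words n d1. \<Sum>z\<in>words n d2. phi (x @ u) (y' @ z) * Tgen Q q n (d1 + d2) (d1 + j) (y' @ z) (y @ w))"
    unfolding wmul_def sum_words_split ..
  also have "\<dots> = (\<Sum>y'\<in>words n d1. if y' = y then (\<Sum>z\<in>words n d2. phi (x @ u) (y @ z) * Tgen Q q n d2 j z w) else 0)"
    using assms ly by (intro sum.cong refl) (auto simp: Tgen_app2 words_len)
  also have "\<dots> = (\<Sum>w'\<in>words n d2. phi (x @ u) (y @ w') * Tgen Q q n d2 j w' w)"
    using assms by (simp add: sum.delta' finite_words)
  finally show ?thesis .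
qed

lemma wmul_T2_left:
  assumes "x \<in> words m d1" "length y = d1" "1 \<le> j"
  shows "wmul (words m (d1 + d2)) (Tgen Q q m (d1 + d2) (d1 + j)) phi (x @ u) (y @ w)
       = (\<Sum>u'\<in>words m d2. Tgen Q q m d2 j u u' * phi (x @ u') (y @ w))"
proof -
  have lx: "length x = d1" using assms words_len by blast
  have "wmul (words m (d1 + d2)) (Tgen Q q m (d1 + d2) (d1 + j)) phi (x @ u) (y @ w)
      = (\<Sum>x'\<in>words m d1. \<Sum>z\<in>words m d2. Tgen Q q m (d1 + d2) (d1 + j) (x @ u) (x' @ z) * phi (x' @ z) (y @ w))"
    unfolding wmul_def sum_words_split ..
  also have "\<dots> = (\<Sum>x'\<in>words m d1. if x' = x then (\<Sum>z\<in>words m d2. Tgen Q q m d2 j u z * phi (x @ z) (y @ w)) else 0)"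
    using assms lx by (intro sum.cong refl) (auto simp: Tgen_app2 words_len)
  also have "\<dots> = (\<Sum>u'\<in>words m d2. Tgen Q q m d2 j u u' * phi (x @ u') (y @ w))"
    using assms by (simp add: sum.delta' finite_words)
  finally show ?thesis .
qed

lemma elim_decomp:
  fixes M :: "'a \<Rightarrow> 'a \<Rightarrow> 'b \<Rightarrow> 'b \<Rightarrow> 'k::field"
  assumes UA: "\<And>f g c. f \<in> UA \<Longrightarrow> g \<in> UA \<Longrightarrow> (\<lambda>x y. f x y + c * g x y) \<in> UA"
    and UB: "\<And>f g c. f \<in> UB \<Longrightarrow> g \<in> UB \<Longrightarrow> (\<lambda>x y. f x y + c * g x y) \<in> UB"
    and UBs: "\<And>f c. f \<in> UB \<Longrightarrow> (\<lambda>x y. c * f x y) \<in> UB"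
    and fin: "finite S"
    and supp: "\<And>x y u w. M x y u w \<noteq> 0 \<Longrightarrow> (x, y) \<in> S"
    and cols: "\<And>u w. (\<lambda>x y. M x y u w) \<in> UA"
    and rows: "\<And>x y. (\<lambda>u w. M x y u w) \<in> UB"
  shows "\<exists>ps. (\<forall>p\<in>set ps. fst p \<in> UA \<and> snd p \<in> UB) \<and>
              (\<forall>x y u w. M x y u w = (\<Sum>p\<leftarrow>ps. fst p x y * snd p u w))"
  using fin supp cols rows
proof (induction S arbitrary: M rule: finite_induct)
  case empty
  then show ?case by (intro exI[of _ "[]"]) auto
next
  case (insert s S)
  obtain x0 y0 where s: "s = (x0, y0)" by (cases s)
  show ?case
  proof (cases "\<forall>u w. M x0 y0 u w = 0")
    case True
    have "M x y u w \<noteq> 0 \<Longrightarrow> (x, y) \<in> S" for x y u w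
      using insert.prems(1)[of x y u w] True s by auto
    then show ?thesis using insert.IH[of M] insert.prems by blast
  next
    case False
    then obtain u0 w0 where nz: "M x0 y0 u0 w0 \<noteq> 0" by blast
    define a where "a = (\<lambda>x y. M x y u0 w0)"
    define c where "c = (\<lambda>u w. inverse (M x0 y0 u0 w0) * M x0 y0 u w)"
    define M' where "M' = (\<lambda>x y u w. M x y u w + (- a x y) * c u w)"
    have aU: "a \<in> UA" unfolding a_def by (rule insert.prems(2))
    have cU: "c \<in> UB" unfolding c_def by (rule UBs[OF insert.prems(3)])
    have M'supp: "(x, y) \<in> S" if "M' x y u w \<noteq> 0" for x y u w
    proof (rule ccontr)
      assume nS: "(x, y) \<notin> S"
      show False
      proof (cases "(x, y) = (x0, y0)")
        case True
        hence "M' x y u w = 0" unfolding M'_def a_def c_def using nz by (simp add: field_simps)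
        thus False using that by simp
      next
        case False
        hence "(x, y) \<notin> insert s S" using nS s by auto
        hence "M x y u w = 0" "a x y = 0" unfolding a_def using insert.prems(1) by blast+
        thus False using that unfolding M'_def by simp
      qed
    qed
    have M'cols: "(\<lambda>x y. M' x y u w) \<in> UA" for u w
    proof -
      have "(\<lambda>x y. M' x y u w) = (\<lambda>x y. M x y u w + (- c u w) * a x y)"
        unfolding M'_def by (auto intro!: ext simp: algebra_simps)
      thus ?thesis using UA[OF insert.prems(2) aU, of u w "- c u w"] by simp
    qed
    have M'rows: "(\<lambda>u w. M' x y u w) \<in> UB" for x y
      unfolding M'_def using UB[OF insert.prems(3) cU, of x y "- a x y"] by simp
    obtain ps where ps: "\<forall>p\<in>set ps. fst p \<in> UA \<and> snd p \<in> UB"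
      "\<forall>x y u w. M' x y u w = (\<Sum>p\<leftarrow>ps. fst p x y * snd p u w)"
      using insert.IH[of M'] M'supp M'cols M'rows by blast
    show ?thesis
    proof (intro exI[of _ "(a, c) # ps"] conjI)
      show "\<forall>p\<in>set ((a, c) # ps). fst p \<in> UA \<and> snd p \<in> UB" using ps aU cU by auto
      show "\<forall>x y u w. M x y u w = (\<Sum>p\<leftarrow>(a, c) # ps. fst p x y * snd p u w)"
        using ps(2) unfolding M'_def by (auto simp: algebra_simps)
    qed
  qed
qed

lemma HomJ_comm: "phi \<in> HomJ Q q d J n m \<Longrightarrow> j \<in> J \<Longrightarrow>
  wmul (words n d) phi (Tgen Q q n d j) = wmul (words m d) (Tgen Q q m d j) phi"
  unfolding HomJ_def by auto

lemma HomJ_wmat_on: "phi \<in> HomJ Q q d J n m \<Longrightarrow> wmat_on m n d phi"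
  unfolding HomJ_def by auto

lemma HomJ_I: "wmat_on m n d f \<Longrightarrow> (\<And>j. j \<in> J \<Longrightarrow>
  wmul (words n d) f (Tgen Q q n d j) = wmul (words m d) (Tgen Q q m d j) f) \<Longrightarrow> f \<in> HomJ Q q d J n m"
  unfolding HomJ_def by auto

lemma Tgen_zero1: "u \<notin> words n d \<Longrightarrow> Tgen Q q n d j u w = 0"
  using Tgen_on by blast
lemma Tgen_zero2: "w \<notin> words n d \<Longrightarrow> Tgen Q q n d j u w = 0"
  using Tgen_on by blast

lemma decomp_exists:
  assumes phi: "phi \<in> HomJ Qx q (d1 + d2) J n m"
    and J1: "\<forall>j\<in>J1. j < d1 \<and> j \<in> J" and J2: "\<forall>j\<in>J2. 1 \<le> j \<and> d1 + j \<in> J"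
  shows "\<exists>ps. (\<forall>p\<in>set ps. fst p \<in> HomJ Qx q d1 J1 n m \<and> snd p \<in> HomJ Qx q d2 J2 n m) \<and>
           phi = (\<lambda>u w. \<Sum>p\<leftarrow>ps. wkron d1 (fst p) (snd p) u w)"
proof -
  define M where "M = (\<lambda>x y u w. if x \<in> words m d1 \<and> y \<in> words n d1 \<and> u \<in> words m d2 \<and> w \<in> words n d2
     then phi (x @ u) (y @ w) else 0)"
  have cols: "(\<lambda>x y. M x y u w) \<in> HomJ Qx q d1 J1 n m" for u w
  proof (cases "u \<in> words m d2 \<and> w \<in> words n d2")
    case False
    hence "(\<lambda>x y. M x y u w) = (\<lambda>x y. 0)" unfolding M_def by auto
    thus ?thesis using HomJ_zero by simp
  next
    case True
    hence uw: "u \<in> words m d2" "w \<in> words n d2" by auto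
    show ?thesis
    proof (rule HomJ_I)
      show "wmat_on m n d1 (\<lambda>x y. M x y u w)" unfolding wmat_on_def M_def by auto
    next
      fix j assume j: "j \<in> J1"
      show "wmul (words n d1) (\<lambda>x y. M x y u w) (Tgen Qx q n d1 j) =
            wmul (words m d1) (Tgen Qx q m d1 j) (\<lambda>x y. M x y u w)"
      proof (intro ext)
        fix x y
        show "wmul (words n d1) (\<lambda>x y. M x y u w) (Tgen Qx q n d1 j) x y =
              wmul (words m d1) (Tgen Qx q m d1 j) (\<lambda>x y. M x y u w) x y"
        proof (cases "x \<in> words m d1 \<and> y \<in> words n d1")
          case True
          hence xy: "x \<in> words m d1" "y \<in> words n d1" by auto
          have lx: "length x = d1" "length y = d1" using xy words_len by blast+
          have "wmul (words n d1) (\<lambda>x y. M x y u w) (Tgen Qx q n d1 j) x y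
              = (\<Sum>y'\<in>words n d1. phi (x @ u) (y' @ w) * Tgen Qx q n d1 j y' y)"
            unfolding wmul_def M_def using xy uw by (intro sum.cong) auto
          also have "\<dots> = wmul (words n (d1 + d2)) phi (Tgen Qx q n (d1 + d2) j) (x @ u) (y @ w)"
            using wmul_T1_right[OF lx(1) xy(2) uw(2), where phi=phi and Q=Qx and q=q and u=u and j=j] j J1 by simp
          also have "\<dots> = wmul (words m (d1 + d2)) (Tgen Qx q m (d1 + d2) j) phi (x @ u) (y @ w)"
            using HomJ_comm[OF phi] j J1 by simp
          also have "\<dots> = (\<Sum>x'\<in>words m d1. Tgen Qx q m d1 j x x' * phi (x' @ u) (y @ w))"
            using wmul_T1_left[OF xy(1) uw(1) lx(2), where phi=phi and Q=Qx and q=q and w=w and j=j] j J1 by simp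
          also have "\<dots> = wmul (words m d1) (Tgen Qx q m d1 j) (\<lambda>x y. M x y u w) x y"
            unfolding wmul_def M_def using xy uw by (intro sum.cong) auto
          finally show ?thesis .
        next
          case False
          have "wmul (words n d1) (\<lambda>x y. M x y u w) (Tgen Qx q n d1 j) x y = 0"
            unfolding wmul_def M_def using False
            by (intro sum.neutral ballI) (auto simp: Tgen_zero1 Tgen_zero2)
          moreover have "wmul (words m d1) (Tgen Qx q m d1 j) (\<lambda>x y. M x y u w) x y = 0"
            unfolding wmul_def M_def using False
            by (intro sum.neutral ballI) (auto simp: Tgen_zero1 Tgen_zero2)
          ultimately show ?thesis by simp
        qed
      qed
    qed
  qed
  have rows: "(\<lambda>u w. M x y u w) \<in> HomJ Qx q d2 J2 n m" for x y
  proof (cases "x \<in> words m d1 \<and> y \<in> words n d1")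
    case False
    hence "(\<lambda>u w. M x y u w) = (\<lambda>u w. 0)" unfolding M_def by auto
    thus ?thesis using HomJ_zero by simp
  next
    case True
    hence xy: "x \<in> words m d1" "y \<in> words n d1" by auto
    have lx: "length x = d1" "length y = d1" using xy words_len by blast+
    show ?thesis
    proof (rule HomJ_I)
      show "wmat_on m n d2 (\<lambda>u w. M x y u w)" unfolding wmat_on_def M_def by auto
    next
      fix j assume j: "j \<in> J2"
      show "wmul (words n d2) (\<lambda>u w. M x y u w) (Tgen Qx q n d2 j) =
            wmul (words m d2) (Tgen Qx q m d2 j) (\<lambda>u w. M x y u w)"
      proof (intro ext)
        fix u w
        show "wmul (words n d2) (\<lambda>u w. M x y u w) (Tgen Qx q n d2 j) u w =
              wmul (words m d2) (Tgen Qx q m d2 j) (\<lambda>u w. M x y u w) u w"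
        proof (cases "u \<in> words m d2 \<and> w \<in> words n d2")
          case True
          hence uw: "u \<in> words m d2" "w \<in> words n d2" by auto
          have "wmul (words n d2) (\<lambda>u w. M x y u w) (Tgen Qx q n d2 j) u w
              = (\<Sum>w'\<in>words n d2. phi (x @ u) (y @ w') * Tgen Qx q n d2 j w' w)"
            unfolding wmul_def M_def using xy uw by (intro sum.cong) auto
          also have "\<dots> = wmul (words n (d1 + d2)) phi (Tgen Qx q n (d1 + d2) (d1 + j)) (x @ u) (y @ w)"
            using wmul_T2_right[OF lx(1) xy(2), where phi=phi and Q=Qx and q=q and u=u and w=w and j=j] j J2 by simp
          also have "\<dots> = wmul (words m (d1 + d2)) (Tgen Qx q m (d1 + d2) (d1 + j)) phi (x @ u) (y @ w)"
            using HomJ_comm[OF phi] j J2 by simp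
          also have "\<dots> = (\<Sum>u'\<in>words m d2. Tgen Qx q m d2 j u u' * phi (x @ u') (y @ w))"
            using wmul_T2_left[OF xy(1) lx(2), where phi=phi and Q=Qx and q=q and u=u and w=w and j=j] j J2 by simp
          also have "\<dots> = wmul (words m d2) (Tgen Qx q m d2 j) (\<lambda>u w. M x y u w) u w"
            unfolding wmul_def M_def using xy uw by (intro sum.cong) auto
          finally show ?thesis .
        next
          case False
          have "wmul (words n d2) (\<lambda>u w. M x y u w) (Tgen Qx q n d2 j) u w = 0"
            unfolding wmul_def M_def using False
            by (intro sum.neutral ballI) (auto simp: Tgen_zero1 Tgen_zero2)
          moreover have "wmul (words m d2) (Tgen Qx q m d2 j) (\<lambda>u w. M x y u w) u w = 0"
            unfolding wmul_def M_def using False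
            by (intro sum.neutral ballI) (auto simp: Tgen_zero1 Tgen_zero2)
          ultimately show ?thesis by simp
        qed
      qed
    qed
  qed
  have supp: "M x y u w \<noteq> 0 \<Longrightarrow> (x, y) \<in> words m d1 \<times> words n d1" for x y u w
    unfolding M_def by (auto split: if_splits)
  have fin: "finite (words m d1 \<times> words n d1)" using finite_words by simp
  note E = elim_decomp[where UA="HomJ Qx q d1 J1 n m" and UB="HomJ Qx q d2 J2 n m" and S="words m d1 \<times> words n d1" and M=M]
  have "\<exists>ps. (\<forall>p\<in>set ps. fst p \<in> HomJ Qx q d1 J1 n m \<and> snd p \<in> HomJ Qx q d2 J2 n m) \<and>
     (\<forall>x y u w. M x y u w = (\<Sum>p\<leftarrow>ps. fst p x y * snd p u w))"
    apply (rule E)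
    apply (erule (1) HomJ_lin)
    apply (erule (1) HomJ_lin)
    apply (erule HomJ_smult)
    apply (rule fin)
    apply (erule supp)
    apply (rule cols)
    apply (rule rows)
    done
  then obtain ps where ps: "\<forall>p\<in>set ps. fst p \<in> HomJ Qx q d1 J1 n m \<and> snd p \<in> HomJ Qx q d2 J2 n m"
     "\<forall>x y u w. M x y u w = (\<Sum>p\<leftarrow>ps. fst p x y * snd p u w)" by blast
  have "phi U W = (\<Sum>p\<leftarrow>ps. wkron d1 (fst p) (snd p) U W)" for U W
  proof -
    have "(\<Sum>p\<leftarrow>ps. wkron d1 (fst p) (snd p) U W) = M (take d1 U) (take d1 W) (drop d1 U) (drop d1 W)"
      using ps(2) unfolding wkron_def by simp
    also have "\<dots> = phi U W"
    proof (cases "U \<in> words m (d1 + d2) \<and> W \<in> words n (d1 + d2)")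
      case True
      thus ?thesis unfolding M_def using words_take_drop by auto
    next
      case False
      hence "phi U W = 0" using HomJ_wmat_on[OF phi] unfolding wmat_on_def by blast
      moreover have "M (take d1 U) (take d1 W) (drop d1 U) (drop d1 W) = 0"
        unfolding M_def using False words_take_drop by auto
      ultimately show ?thesis by simp
    qed
    finally show ?thesis by simp
  qed
  thus ?thesis using ps(1) by (intro exI[of _ ps]) auto
qed

lemma isf_add: "is_functor d H F \<Longrightarrow> 1 \<le> n \<Longrightarrow> 1 \<le> m \<Longrightarrow> f \<in> H n m \<Longrightarrow> g \<in> H n m \<Longrightarrow>
  fmor F n m (\<lambda>u w. f u w + g u w) = (\<lambda>i j. fmor F n m f i j + fmor F n m g i j)"
  unfolding is_functor_def by blast

lemma isf_smult: "is_functor d H F \<Longrightarrow> 1 \<le> n \<Longrightarrow> 1 \<le> m \<Longrightarrow> f \<in> H n m \<Longrightarrow>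
  fmor F n m (\<lambda>u w. c * f u w) = (\<lambda>i j. c * fmor F n m f i j)"
  unfolding is_functor_def by blast

lemma isf_on: "is_functor d H F \<Longrightarrow> 1 \<le> n \<Longrightarrow> 1 \<le> m \<Longrightarrow> f \<in> H n m \<Longrightarrow>
  nmat_on (fdim F m) (fdim F n) (fmor F n m f)"
  unfolding is_functor_def by blast

lemma isf_id: "is_functor d H F \<Longrightarrow> 1 \<le> n \<Longrightarrow> fmor F n n (wid n d) = nid (fdim F n)"
  unfolding is_functor_def by blast

lemma isf_comp: "is_functor d H F \<Longrightarrow> 1 \<le> n \<Longrightarrow> 1 \<le> m \<Longrightarrow> 1 \<le> p \<Longrightarrow> f \<in> H n m \<Longrightarrow> g \<in> H m p \<Longrightarrow>
  fmor F n p (wmul (words m d) g f) = nmul (fdim F m) (fmor F m p g) (fmor F n m f)"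
  unfolding is_functor_def by blast

lemma lin_list:
  assumes F: "is_functor d H F" and nm: "1 \<le> n" "1 \<le> m" and H: "H n m = HomJ Qx q d J n m"
    and ks: "\<forall>k\<in>set ks. a k \<in> H n m"
  shows "(\<lambda>u w. \<Sum>k\<leftarrow>ks. c k * a k u w) \<in> H n m \<and>
         fmor F n m (\<lambda>u w. \<Sum>k\<leftarrow>ks. c k * a k u w) = (\<lambda>i j. \<Sum>k\<leftarrow>ks. c k * fmor F n m (a k) i j)"
  using ks
proof (induction ks)
  case Nil
  have z: "(\<lambda>u w. 0) \<in> H n m" using H HomJ_zero by simp
  have "fmor F n m (\<lambda>u w. 0 * (0::'a)) = (\<lambda>i j. 0 * fmor F n m (\<lambda>u w. 0) i j)"
    using isf_smult[OF F nm z, of 0] by simp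
  then show ?case using z by simp
next
  case (Cons k ks)
  have ak: "a k \<in> H n m" using Cons.prems by simp
  have ck: "(\<lambda>u w. c k * a k u w) \<in> H n m" using HomJ_smult ak H by metis
  from Cons have IH: "(\<lambda>u w. \<Sum>k\<leftarrow>ks. c k * a k u w) \<in> H n m"
    "fmor F n m (\<lambda>u w. \<Sum>k\<leftarrow>ks. c k * a k u w) = (\<lambda>i j. \<Sum>k\<leftarrow>ks. c k * fmor F n m (a k) i j)" by auto
  have mem: "(\<lambda>u w. c k * a k u w + (\<Sum>k\<leftarrow>ks. c k * a k u w)) \<in> H n m"
    using HomJ_add[of "\<lambda>u w. c k * a k u w" Qx q d J n m] ck IH(1) H by simp
  have "fmor F n m (\<lambda>u w. c k * a k u w + (\<Sum>k\<leftarrow>ks. c k * a k u w))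
      = (\<lambda>i j. fmor F n m (\<lambda>u w. c k * a k u w) i j + fmor F n m (\<lambda>u w. \<Sum>k\<leftarrow>ks. c k * a k u w) i j)"
    by (rule isf_add[OF F nm ck IH(1)])
  also have "\<dots> = (\<lambda>i j. c k * fmor F n m (a k) i j + (\<Sum>k\<leftarrow>ks. c k * fmor F n m (a k) i j))"
    using isf_smult[OF F nm ak] IH(2) by simp
  finally show ?case using mem by simp
qed

lemma one_factor:
  assumes F: "is_functor d H F" and nm: "1 \<le> n" "1 \<le> m" and H: "H n m = HomJ Qx q d J n m"
    and ks: "\<forall>k\<in>set ks. a k \<in> H n m" and ks': "\<forall>k\<in>set ks'. a k \<in> H n m"
    and eq: "\<And>u w z. (\<Sum>k\<leftarrow>ks. a k u w * \<beta> k z) = (\<Sum>k\<leftarrow>ks'. a k u w * \<beta> k z)"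
  shows "(\<Sum>k\<leftarrow>ks. fmor F n m (a k) i j * \<beta> k z) = (\<Sum>k\<leftarrow>ks'. fmor F n m (a k) i j * \<beta> k z)"
proof -
  have e: "(\<lambda>u w. \<Sum>k\<leftarrow>ks. \<beta> k z * a k u w) = (\<lambda>u w. \<Sum>k\<leftarrow>ks'. \<beta> k z * a k u w)"
    using eq by (simp add: mult.commute)
  have "(\<lambda>i j. \<Sum>k\<leftarrow>ks. \<beta> k z * fmor F n m (a k) i j) = (\<lambda>i j. \<Sum>k\<leftarrow>ks'. \<beta> k z * fmor F n m (a k) i j)"
    using lin_list[OF F nm H ks, of "\<lambda>k. \<beta> k z"] lin_list[OF F nm H ks', of "\<lambda>k. \<beta> k z"] e by metis
  hence "(\<Sum>k\<leftarrow>ks. \<beta> k z * fmor F n m (a k) i j) = (\<Sum>k\<leftarrow>ks'. \<beta> k z * fmor F n m (a k) i j)"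
    by meson
  thus ?thesis by (simp add: mult.commute)
qed

lemma two_fold:
  assumes F1: "is_functor d1 H1 F1" and F2: "is_functor d2 H2 F2" and nm: "1 \<le> n" "1 \<le> m"
    and H1: "H1 n m = HomJ Q1 q d1 J1 n m" and H2: "H2 n m = HomJ Q2 q d2 J2 n m"
    and ps: "\<forall>p\<in>set ps. fst p \<in> H1 n m \<and> snd p \<in> H2 n m"
    and ps': "\<forall>p\<in>set ps'. fst p \<in> H1 n m \<and> snd p \<in> H2 n m"
    and eq: "\<And>x y u w. (\<Sum>p\<leftarrow>ps. fst p x y * snd p u w) = (\<Sum>p\<leftarrow>ps'. fst p x y * snd p u w)"
  shows "(\<Sum>p\<leftarrow>ps. fmor F1 n m (fst p) i j * fmor F2 n m (snd p) i' j')
       = (\<Sum>p\<leftarrow>ps'. fmor F1 n m (fst p) i j * fmor F2 n m (snd p) i' j')"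
proof -
  have s1: "(\<Sum>p\<leftarrow>ps. fmor F1 n m (fst p) i j * (\<lambda>p z. snd p (fst z) (snd z)) p z)
      = (\<Sum>p\<leftarrow>ps'. fmor F1 n m (fst p) i j * (\<lambda>p z. snd p (fst z) (snd z)) p z)" for i j z
    by (rule one_factor[OF F1 nm H1]) (use ps ps' eq in auto)
  have e2: "(\<Sum>k\<leftarrow>ps. snd k u w * fmor F1 n m (fst k) (fst z) (snd z)) =
          (\<Sum>k\<leftarrow>ps'. snd k u w * fmor F1 n m (fst k) (fst z) (snd z))" for u w z
    using s1[of "fst z" "snd z" "(u, w)"] by (simp add: mult.commute)
  have m2: "\<forall>k\<in>set ps. snd k \<in> H2 n m" "\<forall>k\<in>set ps'. snd k \<in> H2 n m" using ps ps' by auto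
  note s2 = one_factor[where z="(i, j)" and i=i' and j=j' and a=snd and \<beta>="\<lambda>k z. fmor F1 n m (fst k) (fst z) (snd z)", OF F2 nm H2 m2 e2]
  show ?thesis using s2 by (simp add: mult.commute)
qed

lemma sum_list_zero: "(\<And>x. x \<in> set xs \<Longrightarrow> f x = (0::'a::comm_monoid_add)) \<Longrightarrow> (\<Sum>x\<leftarrow>xs. f x) = 0"
  by (induct xs) auto

lemma wkron_app: "length x = d1 \<Longrightarrow> length y = d1 \<Longrightarrow> wkron d1 a b (x @ u) (y @ w) = a x y * b u w"
  unfolding wkron_def by simp

lemma wkron_entries:
  assumes ps: "\<forall>p\<in>set ps. fst p \<in> HomJ Q1 q d1 J1 n m" and ps': "\<forall>p\<in>set ps'. fst p \<in> HomJ Q2 q d1 J2 n m"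
    and eq: "(\<lambda>u w. \<Sum>p\<leftarrow>ps. wkron d1 (fst p) (snd p) u w) = (\<lambda>u w. \<Sum>p\<leftarrow>ps'. wkron d1 (fst p) (snd p) u w)"
  shows "(\<Sum>p\<leftarrow>ps. fst p x y * snd p u w) = (\<Sum>p\<leftarrow>ps'. fst p x y * snd p u w)"
proof (cases "length x = d1 \<and> length y = d1")
  case True
  have "(\<Sum>p\<leftarrow>ps. wkron d1 (fst p) (snd p) (x @ u) (y @ w)) = (\<Sum>p\<leftarrow>ps'. wkron d1 (fst p) (snd p) (x @ u) (y @ w))"
    using eq by meson
  thus ?thesis using True by (simp add: wkron_app)
next
  case False
  have "fst p x y = 0" if "p \<in> set ps" for p
    using HomJ_on[of "fst p" Q1 q d1 J1 n m x y] ps that False words_len by blast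
  moreover have "fst p x y = 0" if "p \<in> set ps'" for p
    using HomJ_on[of "fst p" Q2 q d1 J2 n m x y] ps' that False words_len by blast
  ultimately have "(\<Sum>p\<leftarrow>ps. fst p x y * snd p u w) = 0" "(\<Sum>p\<leftarrow>ps'. fst p x y * snd p u w) = 0"
    by (simp_all add: sum_list_zero)
  thus ?thesis by simp
qed

lemma fdim_prod: "fdim (prod_fun d1 H1 H2 F1 F2) n = fdim F1 n * fdim F2 n"
  unfolding prod_fun_def by simp

lemma fmor_prod:
  assumes F1: "is_functor d1 H1 F1" and F2: "is_functor d2 H2 F2" and nm: "1 \<le> n" "1 \<le> m"
    and H1: "H1 n m = HomJ Q1 q d1 J1 n m" and H2: "H2 n m = HomJ Q2 q d2 J2 n m"
    and ps: "\<forall>p\<in>set ps. fst p \<in> H1 n m \<and> snd p \<in> H2 n m"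
    and phi: "phi = (\<lambda>u w. \<Sum>p\<leftarrow>ps. wkron d1 (fst p) (snd p) u w)"
  shows "fmor (prod_fun d1 H1 H2 F1 F2) n m phi =
    (\<lambda>i j. \<Sum>p\<leftarrow>ps. nkron (fdim F2 m) (fdim F2 n) (fmor F1 n m (fst p)) (fmor F2 n m (snd p)) i j)"
proof -
  have "fmor (prod_fun d1 H1 H2 F1 F2) n m phi = (THE M. \<exists>ps. (\<forall>p\<in>set ps. fst p \<in> H1 n m \<and> snd p \<in> H2 n m) \<and>
         phi = (\<lambda>u w. \<Sum>p\<leftarrow>ps. wkron d1 (fst p) (snd p) u w) \<and>
         M = (\<lambda>i j. \<Sum>p\<leftarrow>ps. nkron (fdim F2 m) (fdim F2 n)
                      (fmor F1 n m (fst p)) (fmor F2 n m (snd p)) i j))"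
    unfolding prod_fun_def by simp
  also have "\<dots> = (\<lambda>i j. \<Sum>p\<leftarrow>ps. nkron (fdim F2 m) (fdim F2 n) (fmor F1 n m (fst p)) (fmor F2 n m (snd p)) i j)"
  proof (rule the_equality)
    show "\<exists>ps'. (\<forall>p\<in>set ps'. fst p \<in> H1 n m \<and> snd p \<in> H2 n m) \<and>
         phi = (\<lambda>u w. \<Sum>p\<leftarrow>ps'. wkron d1 (fst p) (snd p) u w) \<and>
         (\<lambda>i j. \<Sum>p\<leftarrow>ps. nkron (fdim F2 m) (fdim F2 n) (fmor F1 n m (fst p)) (fmor F2 n m (snd p)) i j)
          = (\<lambda>i j. \<Sum>p\<leftarrow>ps'. nkron (fdim F2 m) (fdim F2 n)
                      (fmor F1 n m (fst p)) (fmor F2 n m (snd p)) i j)"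
      using ps phi by blast
  next
    fix M assume "\<exists>ps'. (\<forall>p\<in>set ps'. fst p \<in> H1 n m \<and> snd p \<in> H2 n m) \<and>
         phi = (\<lambda>u w. \<Sum>p\<leftarrow>ps'. wkron d1 (fst p) (snd p) u w) \<and>
         M = (\<lambda>i j. \<Sum>p\<leftarrow>ps'. nkron (fdim F2 m) (fdim F2 n)
                      (fmor F1 n m (fst p)) (fmor F2 n m (snd p)) i j)"
    then obtain ps' where ps': "\<forall>p\<in>set ps'. fst p \<in> H1 n m \<and> snd p \<in> H2 n m"
      and phi': "phi = (\<lambda>u w. \<Sum>p\<leftarrow>ps'. wkron d1 (fst p) (snd p) u w)"
      and M: "M = (\<lambda>i j. \<Sum>p\<leftarrow>ps'. nkron (fdim F2 m) (fdim F2 n)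
                      (fmor F1 n m (fst p)) (fmor F2 n m (snd p)) i j)" by blast
    have eq: "(\<Sum>p\<leftarrow>ps. fst p x y * snd p u w) = (\<Sum>p\<leftarrow>ps'. fst p x y * snd p u w)" for x y u w
    proof -
      have a: "\<forall>p\<in>set ps. fst p \<in> HomJ Q1 q d1 J1 n m" using ps H1 by auto
      have b: "\<forall>p\<in>set ps'. fst p \<in> HomJ Q1 q d1 J1 n m" using ps' H1 by auto
      have c: "(\<lambda>u w. \<Sum>p\<leftarrow>ps. wkron d1 (fst p) (snd p) u w) = (\<lambda>u w. \<Sum>p\<leftarrow>ps'. wkron d1 (fst p) (snd p) u w)"
        using phi phi' by simp
      show ?thesis by (rule wkron_entries[OF a b c])
    qed
    show "M = (\<lambda>i j. \<Sum>p\<leftarrow>ps. nkron (fdim F2 m) (fdim F2 n) (fmor F1 n m (fst p)) (fmor F2 n m (snd p)) i j)"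
      unfolding M nkron_def
      using two_fold[OF F1 F2 nm H1 H2 ps ps' eq] by simp
  qed
  finally show ?thesis .
qed

lemma nkron_on: "nmat_on rA cA A \<Longrightarrow> nmat_on rB cB B \<Longrightarrow> nmat_on (rA * rB) (cA * cB) (nkron rB cB A B)"
  unfolding nmat_on_def
proof (intro allI impI)
  fix i j
  assume A: "\<forall>i j. A i j \<noteq> 0 \<longrightarrow> i < rA \<and> j < cA" and B: "\<forall>i j. B i j \<noteq> 0 \<longrightarrow> i < rB \<and> j < cB"
    and nz: "nkron rB cB A B i j \<noteq> 0"
  have nz2: "A (i div rB) (j div cB) \<noteq> 0" "B (i mod rB) (j mod cB) \<noteq> 0"
    using nz unfolding nkron_def by auto
  have a: "i div rB < rA" "j div cB < cA" using A nz2(1) by auto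
  have b: "i mod rB < rB" "j mod cB < cB" using B nz2(2) by auto
  have p: "rB > 0" "cB > 0" using b by auto
  have "i < rA * rB" using a(1) div_less_iff_less_mult[OF p(1), of i rA] by simp
  moreover have "j < cA * cB" using a(2) div_less_iff_less_mult[OF p(2), of j cA] by simp
  ultimately show "i < rA * rB \<and> j < cA * cB" by simp
qed

lemma nmat_on_sum_list: "(\<And>x. x \<in> set xs \<Longrightarrow> nmat_on r c (f x)) \<Longrightarrow> nmat_on r c (\<lambda>i j. \<Sum>x\<leftarrow>xs. f x i j)"
proof (induction xs)
  case Nil
  then show ?case unfolding nmat_on_def by simp
next
  case (Cons a xs)
  have fa: "nmat_on r c (f a)" using Cons.prems by simp
  have IH: "nmat_on r c (\<lambda>i j. \<Sum>x\<leftarrow>xs. f x i j)" using Cons by simp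
  show ?case unfolding nmat_on_def
  proof (intro allI impI)
    fix i j assume "(\<Sum>x\<leftarrow>a # xs. f x i j) \<noteq> 0"
    hence "f a i j \<noteq> 0 \<or> (\<Sum>x\<leftarrow>xs. f x i j) \<noteq> 0" by auto
    thus "i < r \<and> j < c" using fa IH unfolding nmat_on_def by blast
  qed
qed

lemma nkron_nid: "nkron b b (nid a) (nid b) = nid (a * b)"
proof (intro ext)
  fix i j
  show "nkron b b (nid a) (nid b) i j = nid (a * b) i j"
  proof (cases "b = 0")
    case True
    thus ?thesis unfolding nkron_def nid_def by simp
  next
    case False
    have e: "(i div b = j div b \<and> i mod b = j mod b) = (i = j)"
      by (metis div_mult_mod_eq)
    have l: "(i div b < a) = (i < a * b)" using False
      by (simp add: div_less_iff_less_mult)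
    have lb: "i mod b < b" using False by simp
    have "nkron b b (nid a) (nid b) i j = (if (i div b = j div b \<and> i mod b = j mod b) \<and> i div b < a then 1 else 0)"
      unfolding nkron_def nid_def using lb by simp
    also have "\<dots> = nid (a * b) i j" unfolding nid_def e l by simp
    finally show ?thesis .
  qed
qed

lemma sum_mult_split: "(\<Sum>l<a * b. f l) = (\<Sum>i<a. \<Sum>j<b. f (i * b + j :: nat))"
proof -
  have "(\<Sum>l<a * b. f l) = (\<Sum>i<a. sum f {i * b..<i * b + b})"
    using sum.nat_group[of f b a] by simp
  also have "\<dots> = (\<Sum>i<a. \<Sum>j<b. f (i * b + j))"
  proof (rule sum.cong[OF refl])
    fix i assume "i \<in> {..<a}"
    show "sum f {i * b..<i * b + b} = (\<Sum>j<b. f (i * b + j))"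
      using sum.atLeastLessThan_shift_0[of f "i * b" "i * b + b"]
      by (simp add: atLeast0LessThan comp_def)
  qed
  finally show ?thesis .
qed




lemma nkron_mixed:
  "nmul (rA2 * rB2) (nkron rB1 rB2 A1 B1) (nkron rB2 cB2 A2 B2)
   = nkron rB1 cB2 (nmul rA2 A1 A2) (nmul rB2 B1 B2)"
proof (intro ext)
  fix r c
  show "nmul (rA2 * rB2) (nkron rB1 rB2 A1 B1) (nkron rB2 cB2 A2 B2) r c
      = nkron rB1 cB2 (nmul rA2 A1 A2) (nmul rB2 B1 B2) r c"
  proof (cases "rB2 = 0")
    case True
    thus ?thesis unfolding nmul_def nkron_def by simp
  next
    case False
    have "nmul (rA2 * rB2) (nkron rB1 rB2 A1 B1) (nkron rB2 cB2 A2 B2) r c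
        = (\<Sum>a<rA2. \<Sum>b<rB2. nkron rB1 rB2 A1 B1 r (a * rB2 + b) * nkron rB2 cB2 A2 B2 (a * rB2 + b) c)"
      unfolding nmul_def by (rule sum_mult_split)
    also have "\<dots> = (\<Sum>a<rA2. \<Sum>b<rB2. (A1 (r div rB1) a * A2 a (c div cB2)) * (B1 (r mod rB1) b * B2 b (c mod cB2)))"
    proof (intro sum.cong refl)
      fix a b assume "b \<in> {..<rB2}"
      hence "(a * rB2 + b) div rB2 = a" "(a * rB2 + b) mod rB2 = b" using False by auto
      thus "nkron rB1 rB2 A1 B1 r (a * rB2 + b) * nkron rB2 cB2 A2 B2 (a * rB2 + b) c
          = (A1 (r div rB1) a * A2 a (c div cB2)) * (B1 (r mod rB1) b * B2 b (c mod cB2))"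
        unfolding nkron_def by (simp add: algebra_simps)
    qed
    also have "\<dots> = (\<Sum>a<rA2. A1 (r div rB1) a * A2 a (c div cB2)) * (\<Sum>b<rB2. B1 (r mod rB1) b * B2 b (c mod cB2))"
      by (simp add: sum_product)
    also have "\<dots> = nkron rB1 cB2 (nmul rA2 A1 A2) (nmul rB2 B1 B2) r c"
      unfolding nkron_def nmul_def ..
    finally show ?thesis .
  qed
qed

lemma nkron_sum_left: "nkron rB cB (\<lambda>i j. \<Sum>x\<leftarrow>xs. f x i j) B = (\<lambda>i j. \<Sum>x\<leftarrow>xs. nkron rB cB (f x) B i j)"
  unfolding nkron_def by (simp add: sum_list_mult_const)

lemma nkron_sum_right: "nkron rB cB A (\<lambda>i j. \<Sum>x\<leftarrow>xs. f x i j) = (\<lambda>i j. \<Sum>x\<leftarrow>xs. nkron rB cB A (f x) i j)"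
  unfolding nkron_def by (simp add: sum_list_const_mult)

lemma nkron_smult_left: "nkron rB cB (\<lambda>i j. c * A i j) B = (\<lambda>i j. c * nkron rB cB A B i j)"
  unfolding nkron_def by (auto simp: algebra_simps)

lemma nkron_assoc: "nkron (b * c) (b' * c') A (nkron c c' B C) = nkron c c' (nkron b b' A B) C"
proof (intro ext)
  fix r s
  have d: "r div (b * c) = r div c div b" for r b c :: nat
    by (metis div_mult2_eq mult.commute)
  have m1: "r mod (b * c) div c = r div c mod b" for r b c :: nat
  proof (cases "c = 0")
    case True thus ?thesis by simp
  next
    case False
    have "r mod (c * b) = c * (r div c mod b) + r mod c" by (rule mod_mult2_eq)
    thus ?thesis using False by (simp add: mult.commute)
  qed
  have m2: "r mod (b * c) mod c = r mod c" for r b c :: nat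
    by (simp add: mod_mod_cancel)
  show "nkron (b * c) (b' * c') A (nkron c c' B C) r s = nkron c c' (nkron b b' A B) C r s"
    unfolding nkron_def d m1 m2 by (simp add: mult.assoc)
qed

lemma sum_sum_list_swap: "(\<Sum>l\<in>S. \<Sum>x\<leftarrow>xs. g l x) = (\<Sum>x\<leftarrow>xs. \<Sum>l\<in>S. g l x)"
  by (induction xs) (auto simp: sum.distrib)

lemma nmul_sum_left: "nmul N (\<lambda>i j. \<Sum>x\<leftarrow>xs. f x i j) Y = (\<lambda>i j. \<Sum>x\<leftarrow>xs. nmul N (f x) Y i j)"
  unfolding nmul_def by (simp add: sum_list_mult_const[symmetric] sum_sum_list_swap)

lemma nmul_sum_right: "nmul N Y (\<lambda>i j. \<Sum>x\<leftarrow>xs. f x i j) = (\<lambda>i j. \<Sum>x\<leftarrow>xs. nmul N Y (f x) i j)"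
  unfolding nmul_def by (simp add: sum_list_const_mult[symmetric] sum_sum_list_swap)

lemma sum_list_append_fun: "(\<lambda>i j. \<Sum>x\<leftarrow>xs @ ys. f x i j) = (\<lambda>i j. (\<Sum>x\<leftarrow>xs. f x i j) + (\<Sum>x\<leftarrow>ys. f x i j))"
  by simp

lemma wkron_smult_left: "wkron d (\<lambda>u w. c * a u w) b = (\<lambda>u w. c * wkron d a b u w)"
  unfolding wkron_def by (auto simp: algebra_simps)

lemma wid_wkron: "wid n (e + d) = wkron e (wid n e) (wid n d)"
proof (intro ext)
  fix u w :: "rat list"
  have "(u = w) = (take e u = take e w \<and> drop e u = drop e w)"
    by (metis append_take_drop_id)
  thus "wid n (e + d) u w = wkron e (wid n e) (wid n d) u w"
    unfolding wid_def wkron_def using words_take_drop[of w n e d] by auto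
qed

lemma wmul_wkron: "wmul (words m (e + d)) (wkron e a' b') (wkron e a b)
    = wkron e (wmul (words m e) a' a) (wmul (words m d) b' b)"
proof (intro ext)
  fix u w
  have "wmul (words m (e + d)) (wkron e a' b') (wkron e a b) u w
      = (\<Sum>y\<in>words m e. \<Sum>z\<in>words m d. wkron e a' b' u (y @ z) * wkron e a b (y @ z) w)"
    unfolding wmul_def sum_words_split ..
  also have "\<dots> = (\<Sum>y\<in>words m e. \<Sum>z\<in>words m d. (a' (take e u) y * a y (take e w)) * (b' (drop e u) z * b z (drop e w)))"
    by (intro sum.cong refl) (auto simp: wkron_def words_len algebra_simps)
  also have "\<dots> = wkron e (wmul (words m e) a' a) (wmul (words m d) b' b) u w"
    unfolding wkron_def wmul_def by (simp add: sum_product)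
  finally show "wmul (words m (e + d)) (wkron e a' b') (wkron e a b) u w
      = wkron e (wmul (words m e) a' a) (wmul (words m d) b' b) u w" .
qed

lemma wmul_sum_left: "wmul S (\<lambda>u w. \<Sum>x\<leftarrow>xs. f x u w) Y = (\<lambda>u w. \<Sum>x\<leftarrow>xs. wmul S (f x) Y u w)"
  unfolding wmul_def by (simp add: sum_list_mult_const[symmetric] sum_sum_list_swap)

lemma wmul_sum_right: "wmul S Y (\<lambda>u w. \<Sum>x\<leftarrow>xs. f x u w) = (\<lambda>u w. \<Sum>x\<leftarrow>xs. wmul S Y (f x) u w)"
  unfolding wmul_def by (simp add: sum_list_const_mult[symmetric] sum_sum_list_swap)

lemma Tgen_Qirr: "j \<noteq> 0 \<Longrightarrow> Tgen Q q n d j = Tgen Q' q n d j"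
  unfolding Tgen_def by (intro ext) simp

lemma HomJ_Qirr: "0 \<notin> J \<Longrightarrow> HomJ Q q d J n m = HomJ Q' q d J n m"
proof -
  assume J: "0 \<notin> J"
  have "\<forall>j\<in>J. Tgen Q q n d j = Tgen Q' q n d j \<and> Tgen Q q m d j = Tgen Q' q m d j"
    using J Tgen_Qirr by metis
  thus ?thesis unfolding HomJ_def by auto
qed

lemma HomA_eq: "HomA q d n m = HomJ Qx q d {1..<d} n m"
  unfolding HomA_def by (rule HomJ_Qirr) simp

lemma decomp_gen:
  assumes s: "s \<le> 1" and phi: "phi \<in> HomJ Qx q (e + d) {s..<e + d} n m"
  shows "\<exists>ps. (\<forall>p\<in>set ps. fst p \<in> HomJ Qx q e {s..<e} n m \<and> snd p \<in> HomA q d n m) \<and>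
           phi = (\<lambda>u w. \<Sum>p\<leftarrow>ps. wkron e (fst p) (snd p) u w)"
proof -
  have "\<exists>ps. (\<forall>p\<in>set ps. fst p \<in> HomJ Qx q e {s..<e} n m \<and> snd p \<in> HomJ Qx q d {1..<d} n m) \<and>
           phi = (\<lambda>u w. \<Sum>p\<leftarrow>ps. wkron e (fst p) (snd p) u w)"
    by (rule decomp_exists[OF phi]) (use s in auto)
  thus ?thesis using HomA_eq[of q d n m Qx] by simp
qed

lemma sum_list_concat_map: "(\<Sum>x\<leftarrow>concat (map (\<lambda>a. map (h a) (ys a)) xs). f x) = (\<Sum>a\<leftarrow>xs. \<Sum>b\<leftarrow>ys a. f (h a b))"
  by (induction xs) (auto simp: comp_def)

lemma prod_functor:
  fixes Qx :: "'k::field"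
  assumes s: "s \<le> 1" and G: "is_functor e (HomJ Qx q e {s..<e}) G" and F: "is_functor d (HomA q d) F"
  shows "is_functor (e + d) (HomJ Qx q (e + d) {s..<e + d}) (prod_fun e (HomJ Qx q e {s..<e}) (HomA q d) G F)"
    (is "is_functor _ ?H ?P")
proof -
  have fm: "fmor ?P n m phi = (\<lambda>i j. \<Sum>p\<leftarrow>ps. nkron (fdim F m) (fdim F n) (fmor G n m (fst p)) (fmor F n m (snd p)) i j)"
    if nm: "1 \<le> n" "1 \<le> m" and ps: "\<forall>p\<in>set ps. fst p \<in> HomJ Qx q e {s..<e} n m \<and> snd p \<in> HomA q d n m"
      and phi: "phi = (\<lambda>u w. \<Sum>p\<leftarrow>ps. wkron e (fst p) (snd p) u w)" for n m phi ps
    by (rule fmor_prod[OF G F nm refl _ ps phi]) (simp add: HomA_def)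
  have fd: "fdim ?P n = fdim G n * fdim F n" for n by (rule fdim_prod)
  show ?thesis unfolding is_functor_def
  proof (intro conjI allI impI)
    fix n m f assume nm: "1 \<le> n" "1 \<le> m" and f: "f \<in> ?H n m"
    obtain ps where ps: "\<forall>p\<in>set ps. fst p \<in> HomJ Qx q e {s..<e} n m \<and> snd p \<in> HomA q d n m"
      and phi: "f = (\<lambda>u w. \<Sum>p\<leftarrow>ps. wkron e (fst p) (snd p) u w)" using decomp_gen[OF s f] by blast
    show "nmat_on (fdim ?P m) (fdim ?P n) (fmor ?P n m f)"
      unfolding fm[OF nm ps phi] fd
      by (rule nmat_on_sum_list, rule nkron_on) (use ps isf_on[OF G nm] isf_on[OF F nm] in auto)
  next
    fix n m f g and c :: 'k assume nm: "1 \<le> n" "1 \<le> m" and f: "f \<in> ?H n m" and g: "g \<in> ?H n m"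
    obtain ps where ps: "\<forall>p\<in>set ps. fst p \<in> HomJ Qx q e {s..<e} n m \<and> snd p \<in> HomA q d n m"
      and phi: "f = (\<lambda>u w. \<Sum>p\<leftarrow>ps. wkron e (fst p) (snd p) u w)" using decomp_gen[OF s f] by blast
    obtain ps' where ps': "\<forall>p\<in>set ps'. fst p \<in> HomJ Qx q e {s..<e} n m \<and> snd p \<in> HomA q d n m"
      and phi': "g = (\<lambda>u w. \<Sum>p\<leftarrow>ps'. wkron e (fst p) (snd p) u w)" using decomp_gen[OF s g] by blast
    have a1: "\<forall>p\<in>set (ps @ ps'). fst p \<in> HomJ Qx q e {s..<e} n m \<and> snd p \<in> HomA q d n m"
      using ps ps' by auto
    have a2: "(\<lambda>u w. f u w + g u w) = (\<lambda>u w. \<Sum>p\<leftarrow>ps @ ps'. wkron e (fst p) (snd p) u w)"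
      using phi phi' by simp
    show "fmor ?P n m (\<lambda>u w. f u w + g u w) = (\<lambda>i j. fmor ?P n m f i j + fmor ?P n m g i j)"
      unfolding fm[OF nm a1 a2] fm[OF nm ps phi] fm[OF nm ps' phi'] by simp
    define psc where "psc = map (\<lambda>p. ((\<lambda>u w. c * fst p u w), snd p)) ps"
    have b1: "\<forall>p\<in>set psc. fst p \<in> HomJ Qx q e {s..<e} n m \<and> snd p \<in> HomA q d n m"
      using ps unfolding psc_def by (force intro: HomJ_smult)
    have b2: "(\<lambda>u w. c * f u w) = (\<lambda>u w. \<Sum>p\<leftarrow>psc. wkron e (fst p) (snd p) u w)"
      unfolding phi psc_def by (simp add: wkron_smult_left sum_list_const_mult comp_def)
    have "fmor ?P n m (\<lambda>u w. c * f u w)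
        = (\<lambda>i j. \<Sum>p\<leftarrow>ps. nkron (fdim F m) (fdim F n) (fmor G n m (\<lambda>u w. c * fst p u w)) (fmor F n m (snd p)) i j)"
      unfolding fm[OF nm b1 b2] psc_def by (simp add: comp_def)
    also have "\<dots> = (\<lambda>i j. \<Sum>p\<leftarrow>ps. c * nkron (fdim F m) (fdim F n) (fmor G n m (fst p)) (fmor F n m (snd p)) i j)"
    proof -
      have "\<forall>p\<in>set ps. fmor G n m (\<lambda>u w. c * fst p u w) = (\<lambda>i j. c * fmor G n m (fst p) i j)"
        using ps isf_smult[OF G nm] by blast
      hence "\<forall>p\<in>set ps. nkron (fdim F m) (fdim F n) (fmor G n m (\<lambda>u w. c * fst p u w)) (fmor F n m (snd p))
          = (\<lambda>i j. c * nkron (fdim F m) (fdim F n) (fmor G n m (fst p)) (fmor F n m (snd p)) i j)"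
        by (simp add: nkron_smult_left)
      thus ?thesis by (auto intro!: ext arg_cong[where f=sum_list] map_cong)
    qed
    also have "\<dots> = (\<lambda>i j. c * fmor ?P n m f i j)"
      unfolding fm[OF nm ps phi] by (simp add: sum_list_const_mult)
    finally show "fmor ?P n m (\<lambda>u w. c * f u w) = (\<lambda>i j. c * fmor ?P n m f i j)" .
  next
    fix n :: nat assume n: "1 \<le> n"
    have a1: "\<forall>p\<in>set [(wid n e, wid n d)]. fst p \<in> HomJ Qx q e {s..<e} n n \<and> snd p \<in> HomA q d n n"
      using wid_HomJ unfolding HomA_def by auto
    have a2: "wid n (e + d) = (\<lambda>u w. \<Sum>p\<leftarrow>[(wid n e, wid n d)]. wkron e (fst p) (snd p) u w)"
      using wid_wkron by simp
    show "fmor ?P n n (wid n (e + d)) = nid (fdim ?P n)"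
      unfolding fm[OF n n a1 a2] fd using isf_id[OF G n] isf_id[OF F n] nkron_nid by simp
  next
    fix n m p f g assume nmp: "1 \<le> n" "1 \<le> m" "1 \<le> p" and f: "f \<in> ?H n m" and g: "g \<in> ?H m p"
    obtain ps where ps: "\<forall>p\<in>set ps. fst p \<in> HomJ Qx q e {s..<e} n m \<and> snd p \<in> HomA q d n m"
      and phi: "f = (\<lambda>u w. \<Sum>p\<leftarrow>ps. wkron e (fst p) (snd p) u w)" using decomp_gen[OF s f] by blast
    obtain ps' where ps': "\<forall>r\<in>set ps'. fst r \<in> HomJ Qx q e {s..<e} m p \<and> snd r \<in> HomA q d m p"
      and phi': "g = (\<lambda>u w. \<Sum>r\<leftarrow>ps'. wkron e (fst r) (snd r) u w)" using decomp_gen[OF s g] by blast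
    define h :: "'k wmat \<times> 'k wmat \<Rightarrow> 'k wmat \<times> 'k wmat \<Rightarrow> 'k wmat \<times> 'k wmat" where "h = (\<lambda>p' pp. (wmul (words m e) (fst p') (fst pp), wmul (words m d) (snd p') (snd pp)))"
    define qs where "qs = concat (map (\<lambda>p'. map (h p') ps) ps')"
    have q1: "\<forall>r\<in>set qs. fst r \<in> HomJ Qx q e {s..<e} n p \<and> snd r \<in> HomA q d n p"
      using ps ps' unfolding qs_def h_def HomA_def by (auto intro: HomJ_comp)
    have "wmul (words m (e + d)) g f = (\<lambda>u w. \<Sum>p'\<leftarrow>ps'. \<Sum>pp\<leftarrow>ps. wmul (words m (e + d)) (wkron e (fst p') (snd p')) (wkron e (fst pp) (snd pp)) u w)"
      unfolding phi phi' wmul_sum_left wmul_sum_right ..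
    also have "\<dots> = (\<lambda>u w. \<Sum>r\<leftarrow>qs. wkron e (fst r) (snd r) u w)"
      unfolding qs_def sum_list_concat_map h_def wmul_wkron by simp
    finally have q2: "wmul (words m (e + d)) g f = (\<lambda>u w. \<Sum>r\<leftarrow>qs. wkron e (fst r) (snd r) u w)" .
    have "fmor ?P n p (wmul (words m (e + d)) g f)
        = (\<lambda>i j. \<Sum>r\<leftarrow>qs. nkron (fdim F p) (fdim F n) (fmor G n p (fst r)) (fmor F n p (snd r)) i j)"
      by (rule fm[OF nmp(1,3) q1 q2])
    also have "\<dots> = (\<lambda>i j. \<Sum>p'\<leftarrow>ps'. \<Sum>pp\<leftarrow>ps. nmul (fdim G m * fdim F m)
          (nkron (fdim F p) (fdim F m) (fmor G m p (fst p')) (fmor F m p (snd p')))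
          (nkron (fdim F m) (fdim F n) (fmor G n m (fst pp)) (fmor F n m (snd pp))) i j)"
      unfolding qs_def sum_list_concat_map
    proof (intro ext arg_cong[where f=sum_list] map_cong refl)
      fix i j p' pp assume p': "p' \<in> set ps'" and pp: "pp \<in> set ps"
      have "fmor G n p (fst (h p' pp)) = nmul (fdim G m) (fmor G m p (fst p')) (fmor G n m (fst pp))"
        unfolding h_def using isf_comp[OF G nmp] p' pp ps ps' by simp
      moreover have "fmor F n p (snd (h p' pp)) = nmul (fdim F m) (fmor F m p (snd p')) (fmor F n m (snd pp))"
        unfolding h_def using isf_comp[OF F nmp] p' pp ps ps' by simp
      ultimately show "nkron (fdim F p) (fdim F n) (fmor G n p (fst (h p' pp))) (fmor F n p (snd (h p' pp))) i j
          = nmul (fdim G m * fdim F m)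
          (nkron (fdim F p) (fdim F m) (fmor G m p (fst p')) (fmor F m p (snd p')))
          (nkron (fdim F m) (fdim F n) (fmor G n m (fst pp)) (fmor F n m (snd pp))) i j"
        using nkron_mixed by metis
    qed
    also have "\<dots> = nmul (fdim ?P m) (fmor ?P m p g) (fmor ?P n m f)"
      unfolding fm[OF nmp(1,2) ps phi] fm[OF nmp(2,3) ps' phi'] fd nmul_sum_left nmul_sum_right ..
    finally show "fmor ?P n p (wmul (words m (e + d)) g f) = nmul (fdim ?P m) (fmor ?P m p g) (fmor ?P n m f)" .
  qed
qed

lemma three_fold:
  assumes G: "is_functor e HG G" and F1: "is_functor d1 HA F1" and F2: "is_functor d2 HB F2"
    and nm: "1 \<le> n" "1 \<le> m"
    and HG: "HG n m = HomJ QG q e JG n m" and HA: "HA n m = HomJ QA q d1 JA n m" and HB: "HB n m = HomJ QB q d2 JB n m"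
    and ts: "\<forall>t\<in>set ts. fst t \<in> HG n m \<and> fst (snd t) \<in> HA n m \<and> snd (snd t) \<in> HB n m"
    and ts': "\<forall>t\<in>set ts'. fst t \<in> HG n m \<and> fst (snd t) \<in> HA n m \<and> snd (snd t) \<in> HB n m"
    and eq: "\<And>x y u w v z. (\<Sum>t\<leftarrow>ts. fst t x y * fst (snd t) u w * snd (snd t) v z)
                          = (\<Sum>t\<leftarrow>ts'. fst t x y * fst (snd t) u w * snd (snd t) v z)"
  shows "(\<Sum>t\<leftarrow>ts. fmor G n m (fst t) i j * fmor F1 n m (fst (snd t)) i' j' * fmor F2 n m (snd (snd t)) i2 j2)
       = (\<Sum>t\<leftarrow>ts'. fmor G n m (fst t) i j * fmor F1 n m (fst (snd t)) i' j' * fmor F2 n m (snd (snd t)) i2 j2)"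
proof -
  have mG: "\<forall>t\<in>set ts. fst t \<in> HG n m" "\<forall>t\<in>set ts'. fst t \<in> HG n m" using ts ts' by auto
  have mA: "\<forall>t\<in>set ts. fst (snd t) \<in> HA n m" "\<forall>t\<in>set ts'. fst (snd t) \<in> HA n m" using ts ts' by auto
  have mB: "\<forall>t\<in>set ts. snd (snd t) \<in> HB n m" "\<forall>t\<in>set ts'. snd (snd t) \<in> HB n m" using ts ts' by auto
  have e1: "(\<Sum>t\<leftarrow>ts. fst t u w * (\<lambda>t z. fst (snd t) (fst (fst z)) (snd (fst z)) * snd (snd t) (fst (snd z)) (snd (snd z))) t z)
          = (\<Sum>t\<leftarrow>ts'. fst t u w * (\<lambda>t z. fst (snd t) (fst (fst z)) (snd (fst z)) * snd (snd t) (fst (snd z)) (snd (snd z))) t z)"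
    for u w z using eq[of u w "fst (fst z)" "snd (fst z)" "fst (snd z)" "snd (snd z)"] by (simp add: mult.assoc)
  note R1 = one_factor[where a=fst and \<beta>="\<lambda>t z. fst (snd t) (fst (fst z)) (snd (fst z)) * snd (snd t) (fst (snd z)) (snd (snd z))",
      OF G nm HG mG e1]
  have e2: "(\<Sum>t\<leftarrow>ts. fst (snd t) u w * (\<lambda>t z. fmor G n m (fst t) (fst (fst z)) (snd (fst z)) * snd (snd t) (fst (snd z)) (snd (snd z))) t z)
          = (\<Sum>t\<leftarrow>ts'. fst (snd t) u w * (\<lambda>t z. fmor G n m (fst t) (fst (fst z)) (snd (fst z)) * snd (snd t) (fst (snd z)) (snd (snd z))) t z)"
    for u w z
    using R1[where i="fst (fst z)" and j="snd (fst z)" and z="((u, w), snd z)"] by (simp add: ac_simps)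
  note R2 = one_factor[where a="\<lambda>t. fst (snd t)" and \<beta>="\<lambda>t z. fmor G n m (fst t) (fst (fst z)) (snd (fst z)) * snd (snd t) (fst (snd z)) (snd (snd z))",
      OF F1 nm HA mA e2]
  have e3: "(\<Sum>t\<leftarrow>ts. snd (snd t) u w * (\<lambda>t z. fmor G n m (fst t) (fst (fst z)) (snd (fst z)) * fmor F1 n m (fst (snd t)) (fst (snd z)) (snd (snd z))) t z)
          = (\<Sum>t\<leftarrow>ts'. snd (snd t) u w * (\<lambda>t z. fmor G n m (fst t) (fst (fst z)) (snd (fst z)) * fmor F1 n m (fst (snd t)) (fst (snd z)) (snd (snd z))) t z)"
    for u w z
    using R2[where i="fst (snd z)" and j="snd (snd z)" and z="(fst z, (u, w))"] by (simp add: ac_simps)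
  note R3 = one_factor[where a="\<lambda>t. snd (snd t)" and \<beta>="\<lambda>t z. fmor G n m (fst t) (fst (fst z)) (snd (fst z)) * fmor F1 n m (fst (snd t)) (fst (snd z)) (snd (snd z))",
      OF F2 nm HB mB e3]
  show ?thesis using R3[where i=i2 and j=j2 and z="((i, j), (i', j'))"] by (simp add: ac_simps)
qed

lemma wkron3_entries:
  assumes ts: "\<forall>t\<in>set ts. fst t \<in> HomJ QG q e JG n m \<and> fst (snd t) \<in> HomJ QA q d1 JA n m"
    and ts': "\<forall>t\<in>set ts'. fst t \<in> HomJ QG' q e JG' n m \<and> fst (snd t) \<in> HomJ QA' q d1 JA' n m"
    and eq: "(\<lambda>u w. \<Sum>t\<leftarrow>ts. wkron e (fst t) (wkron d1 (fst (snd t)) (snd (snd t))) u w)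
           = (\<lambda>u w. \<Sum>t\<leftarrow>ts'. wkron (e + d1) (wkron e (fst t) (fst (snd t))) (snd (snd t)) u w)"
  shows "(\<Sum>t\<leftarrow>ts. fst t x y * fst (snd t) u w * snd (snd t) v z)
       = (\<Sum>t\<leftarrow>ts'. fst t x y * fst (snd t) u w * snd (snd t) v z)"
proof (cases "length x = e \<and> length y = e \<and> length u = d1 \<and> length w = d1")
  case True
  have "(\<Sum>t\<leftarrow>ts. wkron e (fst t) (wkron d1 (fst (snd t)) (snd (snd t))) (x @ u @ v) (y @ w @ z))
      = (\<Sum>t\<leftarrow>ts'. wkron (e + d1) (wkron e (fst t) (fst (snd t))) (snd (snd t)) (x @ u @ v) (y @ w @ z))"
    using eq by meson
  moreover have "wkron e a (wkron d1 b c) (x @ u @ v) (y @ w @ z) = a x y * b u w * c v z" for a b c :: "'a wmat"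
    using True by (simp add: wkron_app mult.assoc)
  moreover have "wkron (e + d1) (wkron e a b) c (x @ u @ v) (y @ w @ z) = a x y * b u w * c v z" for a b c :: "'a wmat"
  proof -
    have "wkron (e + d1) (wkron e a b) c ((x @ u) @ v) ((y @ w) @ z) = wkron e a b (x @ u) (y @ w) * c v z"
      using True by (intro wkron_app) auto
    thus ?thesis using True by (simp add: wkron_app)
  qed
  ultimately show ?thesis by simp
next
  case False
  have z: "fst t x y * fst (snd t) u w = 0" if "fst t \<in> HomJ Q1 q e J1 n m" "fst (snd t) \<in> HomJ Q2 q d1 J2 n m" for t Q1 J1 Q2 J2
  proof -
    have "fst t x y = 0 \<or> fst (snd t) u w = 0"
      using False HomJ_on[OF that(1), of x y] HomJ_on[OF that(2), of u w] words_len by metis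
    thus ?thesis by auto
  qed
  have "(\<Sum>t\<leftarrow>ts. fst t x y * fst (snd t) u w * snd (snd t) v z) = 0"
  proof (rule sum_list_zero)
    fix t assume "t \<in> set ts"
    hence "fst t x y * fst (snd t) u w = 0" using ts z[of t QG JG QA JA] by auto
    thus "fst t x y * fst (snd t) u w * snd (snd t) v z = 0" by simp
  qed
  moreover have "(\<Sum>t\<leftarrow>ts'. fst t x y * fst (snd t) u w * snd (snd t) v z) = 0"
  proof (rule sum_list_zero)
    fix t assume "t \<in> set ts'"
    hence "fst t x y * fst (snd t) u w = 0" using ts' z[of t QG' JG' QA' JA'] by auto
    thus "fst t x y * fst (snd t) u w * snd (snd t) v z = 0" by simp
  qed
  ultimately show ?thesis by simp
qed

lemma wkron_sum_right: "wkron d a (\<lambda>u w. \<Sum>x\<leftarrow>xs. f x u w) = (\<lambda>u w. \<Sum>x\<leftarrow>xs. wkron d a (f x) u w)"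
  unfolding wkron_def by (simp add: sum_list_const_mult)

lemma wkron_sum_left: "wkron d (\<lambda>u w. \<Sum>x\<leftarrow>xs. f x u w) b = (\<lambda>u w. \<Sum>x\<leftarrow>xs. wkron d (f x) b u w)"
  unfolding wkron_def by (simp add: sum_list_mult_const)

lemma nkron2_entry: "nkron c c' (nkron b b' A B) C r s
   = A (r div c div b) (s div c' div b') * B (r div c mod b) (s div c' mod b') * C (r mod c) (s mod c')"
  unfolding nkron_def by simp

lemma assoc_gen:
  fixes Qx :: "'k::field"
  assumes s: "s \<le> 1" and G: "is_functor e (HomJ Qx q e {s..<e}) G"
    and F1: "is_functor d1 (HomA q d1) F1" and F2: "is_functor d2 (HomA q d2) F2"
  shows "feq (HomJ Qx q (e + d1 + d2) {s..<e + d1 + d2})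
     (prod_fun e (HomJ Qx q e {s..<e}) (HomA q (d1 + d2)) G (tensorA q d1 d2 F1 F2))
     (prod_fun (e + d1) (HomJ Qx q (e + d1) {s..<e + d1}) (HomA q d2) (prod_fun e (HomJ Qx q e {s..<e}) (HomA q d1) G F1) F2)"
proof -
  let ?T = "tensorA q d1 d2 F1 F2"
  let ?GF = "prod_fun e (HomJ Qx q e {s..<e}) (HomA q d1) G F1"
  have F1': "is_functor d1 (HomJ 1 q d1 {1..<d1}) F1" using F1 unfolding HomA_def .
  have T: "is_functor (d1 + d2) (HomA q (d1 + d2)) ?T"
    using prod_functor[OF order.refl F1' F2] unfolding tensorA_def HomA_def by simp
  have GF: "is_functor (e + d1) (HomJ Qx q (e + d1) {s..<e + d1}) ?GF"
    by (rule prod_functor[OF s G F1])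
  have HA: "HomA q d n m = HomJ 1 q d {1..<d} n m" for d n m unfolding HomA_def ..
  have fdT: "fdim ?T n = fdim F1 n * fdim F2 n" for n unfolding tensorA_def by (rule fdim_prod)
  show ?thesis unfolding feq_def
  proof (intro conjI allI impI)
    fix n :: nat
    show "fdim (prod_fun e (HomJ Qx q e {s..<e}) (HomA q (d1 + d2)) G ?T) n
        = fdim (prod_fun (e + d1) (HomJ Qx q (e + d1) {s..<e + d1}) (HomA q d2) ?GF F2) n"
      by (simp add: fdim_prod fdT mult.assoc)
  next
    fix n m phi assume nm: "1 \<le> n" "1 \<le> m" and phi: "phi \<in> HomJ Qx q (e + d1 + d2) {s..<e + d1 + d2} n m"
    define K where "K = (\<lambda>t :: 'k wmat \<times> 'k wmat \<times> 'k wmat. nkron (fdim F2 m) (fdim F2 n)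
        (nkron (fdim F1 m) (fdim F1 n) (fmor G n m (fst t)) (fmor F1 n m (fst (snd t)))) (fmor F2 n m (snd (snd t))))"
    define P12 where "P12 = (\<lambda>b (qs :: ('k wmat \<times> 'k wmat) list). (\<forall>r\<in>set qs. fst r \<in> HomA q d1 n m \<and> snd r \<in> HomA q d2 n m) \<and>
           b = (\<lambda>u w. \<Sum>r\<leftarrow>qs. wkron d1 (fst r) (snd r) u w))"
    define dec where "dec = (\<lambda>b. SOME qs. P12 b qs)"
    have decP: "P12 b (dec b)" if "b \<in> HomA q (d1 + d2) n m" for b
    proof -
      have "b \<in> HomJ 1 q (d1 + d2) {1..<d1 + d2} n m" using that unfolding HomA_def .
      from decomp_gen[OF _ this] have "\<exists>qs. P12 b qs" unfolding P12_def HA by simp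
      thus ?thesis unfolding dec_def by (rule someI_ex)
    qed
    define P01 where "P01 = (\<lambda>a (qs :: ('k wmat \<times> 'k wmat) list). (\<forall>r\<in>set qs. fst r \<in> HomJ Qx q e {s..<e} n m \<and> snd r \<in> HomA q d1 n m) \<and>
           a = (\<lambda>u w. \<Sum>r\<leftarrow>qs. wkron e (fst r) (snd r) u w))"
    define dec' where "dec' = (\<lambda>a. SOME qs. P01 a qs)"
    have dec'P: "P01 a (dec' a)" if "a \<in> HomJ Qx q (e + d1) {s..<e + d1} n m" for a
    proof -
      from decomp_gen[OF s that] have "\<exists>qs. P01 a qs" unfolding P01_def by simp
      thus ?thesis unfolding dec'_def by (rule someI_ex)
    qed
    have phiL: "phi \<in> HomJ Qx q (e + (d1 + d2)) {s..<e + (d1 + d2)} n m" using phi by (simp add: add.assoc)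
    obtain ps where ps: "\<forall>p\<in>set ps. fst p \<in> HomJ Qx q e {s..<e} n m \<and> snd p \<in> HomA q (d1 + d2) n m"
      and phips: "phi = (\<lambda>u w. \<Sum>p\<leftarrow>ps. wkron e (fst p) (snd p) u w)" using decomp_gen[OF s phiL] by blast
    define L where "L = concat (map (\<lambda>p. map (\<lambda>r. (fst p, fst r, snd r)) (dec (snd p))) ps)"
    have L1: "\<forall>t\<in>set L. fst t \<in> HomJ Qx q e {s..<e} n m \<and> fst (snd t) \<in> HomA q d1 n m \<and> snd (snd t) \<in> HomA q d2 n m"
      using ps decP unfolding L_def P12_def by fastforce
    have fT: "fmor ?T n m b = (\<lambda>i j. \<Sum>r\<leftarrow>dec b. nkron (fdim F2 m) (fdim F2 n) (fmor F1 n m (fst r)) (fmor F2 n m (snd r)) i j)"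
      if "b \<in> HomA q (d1 + d2) n m" for b
      unfolding tensorA_def
      by (rule fmor_prod[OF F1 F2 nm HA HA]) (use decP[OF that] in \<open>auto simp: P12_def\<close>)
    have LHS: "fmor (prod_fun e (HomJ Qx q e {s..<e}) (HomA q (d1 + d2)) G ?T) n m phi = (\<lambda>i j. \<Sum>t\<leftarrow>L. K t i j)"
    proof -
      have "fmor (prod_fun e (HomJ Qx q e {s..<e}) (HomA q (d1 + d2)) G ?T) n m phi
         = (\<lambda>i j. \<Sum>p\<leftarrow>ps. nkron (fdim ?T m) (fdim ?T n) (fmor G n m (fst p)) (fmor ?T n m (snd p)) i j)"
        by (rule fmor_prod[OF G T nm refl HA ps phips])
      also have "\<dots> = (\<lambda>i j. \<Sum>t\<leftarrow>L. K t i j)"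
        unfolding L_def sum_list_concat_map
      proof (intro ext arg_cong[where f=sum_list] map_cong refl)
        fix i j p assume p: "p \<in> set ps"
        hence b: "snd p \<in> HomA q (d1 + d2) n m" using ps by auto
        show "nkron (fdim ?T m) (fdim ?T n) (fmor G n m (fst p)) (fmor ?T n m (snd p)) i j
            = (\<Sum>r\<leftarrow>dec (snd p). K (fst p, fst r, snd r) i j)"
          unfolding fT[OF b] fdT nkron_sum_right K_def nkron_assoc by simp
      qed
      finally show ?thesis .
    qed
    have phiL': "phi = (\<lambda>u w. \<Sum>t\<leftarrow>L. wkron e (fst t) (wkron d1 (fst (snd t)) (snd (snd t))) u w)"
    proof -
      have "phi = (\<lambda>u w. \<Sum>p\<leftarrow>ps. \<Sum>r\<leftarrow>dec (snd p). wkron e (fst p) (wkron d1 (fst r) (snd r)) u w)"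
      proof -
        have "\<forall>p\<in>set ps. wkron e (fst p) (snd p) = (\<lambda>u w. \<Sum>r\<leftarrow>dec (snd p). wkron e (fst p) (wkron d1 (fst r) (snd r)) u w)"
        proof
          fix p assume "p \<in> set ps"
          hence "snd p = (\<lambda>u w. \<Sum>r\<leftarrow>dec (snd p). wkron d1 (fst r) (snd r) u w)"
            using ps decP unfolding P12_def by blast
          hence "wkron e (fst p) (snd p) = wkron e (fst p) (\<lambda>u w. \<Sum>r\<leftarrow>dec (snd p). wkron d1 (fst r) (snd r) u w)"
            by simp
          thus "wkron e (fst p) (snd p) = (\<lambda>u w. \<Sum>r\<leftarrow>dec (snd p). wkron e (fst p) (wkron d1 (fst r) (snd r)) u w)"
            unfolding wkron_sum_right by simp
        qed
        thus ?thesis unfolding phips by (auto intro!: ext arg_cong[where f=sum_list] map_cong)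
      qed
      thus ?thesis unfolding L_def sum_list_concat_map by simp
    qed
    obtain ps' where ps': "\<forall>p\<in>set ps'. fst p \<in> HomJ Qx q (e + d1) {s..<e + d1} n m \<and> snd p \<in> HomA q d2 n m"
      and phips': "phi = (\<lambda>u w. \<Sum>p\<leftarrow>ps'. wkron (e + d1) (fst p) (snd p) u w)" using decomp_gen[OF s phi] by blast
    define L' where "L' = concat (map (\<lambda>p. map (\<lambda>r. (fst r, snd r, snd p)) (dec' (fst p))) ps')"
    have L'1: "\<forall>t\<in>set L'. fst t \<in> HomJ Qx q e {s..<e} n m \<and> fst (snd t) \<in> HomA q d1 n m \<and> snd (snd t) \<in> HomA q d2 n m"
      using ps' dec'P unfolding L'_def P01_def by fastforce
    have fGF: "fmor ?GF n m a = (\<lambda>i j. \<Sum>r\<leftarrow>dec' a. nkron (fdim F1 m) (fdim F1 n) (fmor G n m (fst r)) (fmor F1 n m (snd r)) i j)"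
      if "a \<in> HomJ Qx q (e + d1) {s..<e + d1} n m" for a
      by (rule fmor_prod[OF G F1 nm refl HA]) (use dec'P[OF that] in \<open>auto simp: P01_def\<close>)
    have RHS: "fmor (prod_fun (e + d1) (HomJ Qx q (e + d1) {s..<e + d1}) (HomA q d2) ?GF F2) n m phi = (\<lambda>i j. \<Sum>t\<leftarrow>L'. K t i j)"
    proof -
      have "fmor (prod_fun (e + d1) (HomJ Qx q (e + d1) {s..<e + d1}) (HomA q d2) ?GF F2) n m phi
         = (\<lambda>i j. \<Sum>p\<leftarrow>ps'. nkron (fdim F2 m) (fdim F2 n) (fmor ?GF n m (fst p)) (fmor F2 n m (snd p)) i j)"
        by (rule fmor_prod[OF GF F2 nm refl HA ps' phips'])
      also have "\<dots> = (\<lambda>i j. \<Sum>t\<leftarrow>L'. K t i j)"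
        unfolding L'_def sum_list_concat_map
      proof (intro ext arg_cong[where f=sum_list] map_cong refl)
        fix i j p assume p: "p \<in> set ps'"
        hence a: "fst p \<in> HomJ Qx q (e + d1) {s..<e + d1} n m" using ps' by auto
        show "nkron (fdim F2 m) (fdim F2 n) (fmor ?GF n m (fst p)) (fmor F2 n m (snd p)) i j
            = (\<Sum>r\<leftarrow>dec' (fst p). K (fst r, snd r, snd p) i j)"
          unfolding fGF[OF a] nkron_sum_left K_def by simp
      qed
      finally show ?thesis .
    qed
    have phiR': "phi = (\<lambda>u w. \<Sum>t\<leftarrow>L'. wkron (e + d1) (wkron e (fst t) (fst (snd t))) (snd (snd t)) u w)"
    proof -
      have "phi = (\<lambda>u w. \<Sum>p\<leftarrow>ps'. \<Sum>r\<leftarrow>dec' (fst p). wkron (e + d1) (wkron e (fst r) (snd r)) (snd p) u w)"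
      proof -
        have "\<forall>p\<in>set ps'. wkron (e + d1) (fst p) (snd p) = (\<lambda>u w. \<Sum>r\<leftarrow>dec' (fst p). wkron (e + d1) (wkron e (fst r) (snd r)) (snd p) u w)"
        proof
          fix p assume "p \<in> set ps'"
          hence "fst p = (\<lambda>u w. \<Sum>r\<leftarrow>dec' (fst p). wkron e (fst r) (snd r) u w)"
            using ps' dec'P unfolding P01_def by blast
          hence "wkron (e + d1) (fst p) (snd p) = wkron (e + d1) (\<lambda>u w. \<Sum>r\<leftarrow>dec' (fst p). wkron e (fst r) (snd r) u w) (snd p)"
            by simp
          thus "wkron (e + d1) (fst p) (snd p) = (\<lambda>u w. \<Sum>r\<leftarrow>dec' (fst p). wkron (e + d1) (wkron e (fst r) (snd r)) (snd p) u w)"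
            unfolding wkron_sum_left by simp
        qed
        thus ?thesis unfolding phips' by (auto intro!: ext arg_cong[where f=sum_list] map_cong)
      qed
      thus ?thesis unfolding L'_def sum_list_concat_map by simp
    qed
    have ent: "(\<Sum>t\<leftarrow>L. fst t x y * fst (snd t) u w * snd (snd t) v z)
       = (\<Sum>t\<leftarrow>L'. fst t x y * fst (snd t) u w * snd (snd t) v z)" for x y u w v z
    proof (rule wkron3_entries)
      show "\<forall>t\<in>set L. fst t \<in> HomJ Qx q e {s..<e} n m \<and> fst (snd t) \<in> HomJ 1 q d1 {1..<d1} n m"
        using L1 HA by auto
      show "\<forall>t\<in>set L'. fst t \<in> HomJ Qx q e {s..<e} n m \<and> fst (snd t) \<in> HomJ 1 q d1 {1..<d1} n m"
        using L'1 HA by auto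
      show "(\<lambda>u w. \<Sum>t\<leftarrow>L. wkron e (fst t) (wkron d1 (fst (snd t)) (snd (snd t))) u w) =
            (\<lambda>u w. \<Sum>t\<leftarrow>L'. wkron (e + d1) (wkron e (fst t) (fst (snd t))) (snd (snd t)) u w)"
        using phiL' phiR' by simp
    qed
    have "(\<lambda>i j. \<Sum>t\<leftarrow>L. K t i j) = (\<lambda>i j. \<Sum>t\<leftarrow>L'. K t i j)"
    proof (intro ext)
      fix i j
      show "(\<Sum>t\<leftarrow>L. K t i j) = (\<Sum>t\<leftarrow>L'. K t i j)"
        unfolding K_def nkron2_entry
        by (rule three_fold[OF G F1 F2 nm refl HA HA L1 L'1 ent])
    qed
    thus "fmor (prod_fun e (HomJ Qx q e {s..<e}) (HomA q (d1 + d2)) G ?T) n m phi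
        = fmor (prod_fun (e + d1) (HomJ Qx q (e + d1) {s..<e + d1}) (HomA q d2) ?GF F2) n m phi"
      unfolding LHS RHS .
  qed
qed

lemma words_zero: "words n 0 = {[]}"
  unfolding words_def by auto

definition one0 :: "'k::field wmat" where
  "one0 = (\<lambda>u w. if u = [] \<and> w = [] then 1 else 0)"

lemma one0_HomA: "one0 \<in> HomA q 0 n m"
  unfolding HomA_def HomJ_def wmat_on_def one0_def by (auto simp: words_zero)

lemma HomA0_iff: "f \<in> HomA q 0 n m \<longleftrightarrow> wmat_on m n 0 f"
  unfolding HomA_def HomJ_def by simp

lemma unit_functor: "is_functor 0 (HomA q 0) (unitA :: 'k::field fctr)"
  unfolding is_functor_def
proof (intro conjI allI impI)
  fix n m and f :: "'k wmat"
  show "nmat_on (fdim unitA m) (fdim unitA n) (fmor unitA n m f)"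
    unfolding unitA_def nmat_on_def by auto
next
  fix n m and f g :: "'k wmat" and c :: 'k
  show "fmor unitA n m (\<lambda>u w. f u w + g u w) = (\<lambda>i j. fmor unitA n m f i j + fmor unitA n m g i j)"
    unfolding unitA_def by (auto intro!: ext)
  show "fmor unitA n m (\<lambda>u w. c * f u w) = (\<lambda>i j. c * fmor unitA n m f i j)"
    unfolding unitA_def by (auto intro!: ext)
next
  fix n :: nat
  show "fmor unitA n n (wid n 0) = nid (fdim (unitA :: 'k fctr) n)"
    unfolding unitA_def wid_def nid_def by (auto intro!: ext simp: words_zero)
next
  fix n m p and f g :: "'k wmat"
  show "fmor unitA n p (wmul (words m 0) g f) = nmul (fdim unitA m) (fmor unitA m p g) (fmor unitA n m f)"
    unfolding unitA_def wmul_def nmul_def words_zero by (auto intro!: ext)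
qed

lemma nkron_unit_left: "nmat_on r c B \<Longrightarrow> nkron r c (\<lambda>i j. if i = 0 \<and> j = 0 then 1 else 0) B = B"
proof (intro ext)
  fix i j assume B: "nmat_on r c B"
  show "nkron r c (\<lambda>i j. if i = 0 \<and> j = 0 then 1 else 0) B i j = B i j"
  proof (cases "i < r \<and> j < c")
    case True thus ?thesis unfolding nkron_def by simp
  next
    case False
    hence Bz: "B i j = 0" using B unfolding nmat_on_def by blast
    show ?thesis
    proof (cases "r = 0 \<or> c = 0")
      case True
      have "B (i mod r) (j mod c) = 0" using B True unfolding nmat_on_def by auto
      thus ?thesis unfolding nkron_def using Bz by simp
    next
      case False2: False
      have "i div r \<noteq> 0 \<or> j div c \<noteq> 0"
        using False False2 div_less_iff_less_mult[of r i 1] div_less_iff_less_mult[of c j 1] by auto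
      thus ?thesis unfolding nkron_def using Bz by auto
    qed
  qed
qed

lemma fmor_unit_one0: "fmor unitA n m one0 = (\<lambda>i j. if i = 0 \<and> j = 0 then 1 else 0)"
  unfolding unitA_def one0_def by simp

lemma nkron_unit_right: "nkron 1 1 A (\<lambda>i j. if i = 0 \<and> j = 0 then c else 0) = (\<lambda>i j. c * A i j)"
  unfolding nkron_def by (auto intro!: ext)

lemma nkron_nid1: "nkron 1 1 A (nid 1) = A"
  unfolding nkron_def nid_def by (auto intro!: ext)

lemma left_unit:
  assumes F: "is_functor d (HomA q d) F"
  shows "feq (HomA q d) (tensorA q 0 d unitA F) F"
  unfolding feq_def
proof (intro conjI allI impI)
  fix n :: nat
  show "fdim (tensorA q 0 d unitA F) n = fdim F n" unfolding tensorA_def fdim_prod unitA_def by simp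
next
  fix n m phi assume nm: "1 \<le> n" "1 \<le> m" and phi: "phi \<in> HomA q d n m"
  have ps: "\<forall>p\<in>set [(one0, phi)]. fst p \<in> HomA q 0 n m \<and> snd p \<in> HomA q d n m"
    using one0_HomA phi by auto
  have ph: "phi = (\<lambda>u w. \<Sum>p\<leftarrow>[(one0, phi)]. wkron 0 (fst p) (snd p) u w)"
    unfolding wkron_def one0_def by simp
  have HA: "HomA q d' n m = HomJ 1 q d' {1..<d'} n m" for d' unfolding HomA_def ..
  have "fmor (tensorA q 0 d unitA F) n m phi
      = (\<lambda>i j. \<Sum>p\<leftarrow>[(one0, phi)]. nkron (fdim F m) (fdim F n) (fmor unitA n m (fst p)) (fmor F n m (snd p)) i j)"
    unfolding tensorA_def by (rule fmor_prod[OF unit_functor F nm HA HA ps ph])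
  also have "\<dots> = fmor F n m phi"
    using nkron_unit_left[OF isf_on[OF F nm phi]]
    by (simp add: fmor_unit_one0)
  finally show "fmor (tensorA q 0 d unitA F) n m phi = fmor F n m phi" .
qed

lemma nat_star:
  assumes G: "is_functor e (HomB Q q e) G" and G': "is_functor e (HomB Q q e) G'"
    and F: "is_functor d (HomA q d) F" and F': "is_functor d (HomA q d) F'"
    and eta: "nat_trans (HomB Q q e) G G' eta" and theta: "nat_trans (HomA q d) F F' theta"
  shows "nat_trans (HomB Q q (e + d)) (starBA Q q e d G F) (starBA Q q e d G' F') (nt_kron F' F eta theta)"
  unfolding nat_trans_def
proof (intro conjI allI impI)
  fix n :: nat assume n: "1 \<le> n"
  show "nmat_on (fdim (starBA Q q e d G' F') n) (fdim (starBA Q q e d G F) n) (nt_kron F' F eta theta n)"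
    unfolding starBA_def fdim_prod nt_kron_def
    by (rule nkron_on) (use eta theta n in \<open>auto simp: nat_trans_def\<close>)
next
  fix n m f assume nm: "1 \<le> n" "1 \<le> m" and f: "f \<in> HomB Q q (e + d) n m"
  have fJ: "f \<in> HomJ Q q (e + d) {0..<e + d} n m" using f unfolding HomB_def .
  obtain ps where ps: "\<forall>p\<in>set ps. fst p \<in> HomJ Q q e {0..<e} n m \<and> snd p \<in> HomA q d n m"
    and phi: "f = (\<lambda>u w. \<Sum>p\<leftarrow>ps. wkron e (fst p) (snd p) u w)" using decomp_gen[OF _ fJ] by auto
  have psB: "\<forall>p\<in>set ps. fst p \<in> HomB Q q e n m \<and> snd p \<in> HomA q d n m" using ps unfolding HomB_def .
  have HB: "HomB Q q e n m = HomJ Q q e {0..<e} n m" unfolding HomB_def ..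
  have HA: "HomA q d n m = HomJ 1 q d {1..<d} n m" unfolding HomA_def ..
  have eN: "nmul (fdim G' n) (fmor G' n m a) (eta n) = nmul (fdim G m) (eta m) (fmor G n m a)" if "a \<in> HomB Q q e n m" for a
    using eta nm that unfolding nat_trans_def by blast
  have tN: "nmul (fdim F' n) (fmor F' n m b) (theta n) = nmul (fdim F m) (theta m) (fmor F n m b)" if "b \<in> HomA q d n m" for b
    using theta nm that unfolding nat_trans_def by blast
  have "nmul (fdim (starBA Q q e d G' F') n) (fmor (starBA Q q e d G' F') n m f) (nt_kron F' F eta theta n)
      = (\<lambda>i j. \<Sum>p\<leftarrow>ps. nkron (fdim F' m) (fdim F n) (nmul (fdim G' n) (fmor G' n m (fst p)) (eta n))
            (nmul (fdim F' n) (fmor F' n m (snd p)) (theta n)) i j)"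
    unfolding starBA_def fmor_prod[OF G' F' nm HB HA psB phi] fdim_prod nt_kron_def nmul_sum_left nkron_mixed ..
  also have "\<dots> = (\<lambda>i j. \<Sum>p\<leftarrow>ps. nkron (fdim F' m) (fdim F n) (nmul (fdim G m) (eta m) (fmor G n m (fst p)))
            (nmul (fdim F m) (theta m) (fmor F n m (snd p))) i j)"
    using psB eN tN by (auto intro!: ext arg_cong[where f=sum_list] map_cong)
  also have "\<dots> = nmul (fdim (starBA Q q e d G F) m) (nt_kron F' F eta theta m) (fmor (starBA Q q e d G F) n m f)"
    unfolding starBA_def fmor_prod[OF G F nm HB HA psB phi] fdim_prod nt_kron_def nmul_sum_right nkron_mixed ..
  finally show "nmul (fdim (starBA Q q e d G' F') n) (fmor (starBA Q q e d G' F') n m f) (nt_kron F' F eta theta n)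
      = nmul (fdim (starBA Q q e d G F) m) (nt_kron F' F eta theta m) (fmor (starBA Q q e d G F) n m f)" .
qed

lemma right_unit:
  fixes Q :: "'k::field"
  assumes G: "is_functor e (HomB Q q e) G"
  shows "feq (HomB Q q e) (starBA Q q e 0 G unitA) G"
  unfolding feq_def
proof (intro conjI allI impI)
  fix n :: nat
  show "fdim (starBA Q q e 0 G unitA) n = fdim G n" unfolding starBA_def fdim_prod unitA_def by simp
next
  fix n m phi assume nm: "1 \<le> n" "1 \<le> m" and phi: "phi \<in> HomB Q q e n m"
  have ps: "\<forall>p\<in>set [(phi, one0)]. fst p \<in> HomB Q q e n m \<and> snd p \<in> HomA q 0 n m"
    using one0_HomA phi by auto
  have phiJ: "phi \<in> HomJ Q q e {0..<e} n m" using phi unfolding HomB_def .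
  have ph: "phi = (\<lambda>u w. \<Sum>p\<leftarrow>[(phi, one0)]. wkron e (fst p) (snd p) u w)"
  proof (intro ext)
    fix u w
    show "phi u w = (\<Sum>p\<leftarrow>[(phi, one0)]. wkron e (fst p) (snd p) u w)"
    proof (cases "length u = e \<and> length w = e")
      case True thus ?thesis unfolding wkron_def one0_def by simp
    next
      case False
      hence z: "phi u w = 0" using HomJ_on[OF phiJ, of u w] words_len by metis
      show ?thesis
      proof (cases "drop e u = [] \<and> drop e w = []")
        case True
        hence "take e u = u" "take e w = w" by auto
        thus ?thesis unfolding wkron_def one0_def using z by simp
      next
        case False
        thus ?thesis unfolding wkron_def one0_def using z by auto
      qed
    qed
  qed
  have HB: "HomB Q q e n m = HomJ Q q e {0..<e} n m" unfolding HomB_def ..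
  have HA: "HomA q 0 n m = HomJ 1 q 0 {1..<0} n m" unfolding HomA_def ..
  have "fmor (starBA Q q e 0 G unitA) n m phi
      = (\<lambda>i j. \<Sum>p\<leftarrow>[(phi, one0 :: 'k wmat)]. nkron (fdim (unitA :: 'k fctr) m) (fdim (unitA :: 'k fctr) n) (fmor G n m (fst p)) (fmor unitA n m (snd p)) i j)"
    unfolding starBA_def by (rule fmor_prod[OF G unit_functor nm HB HA ps ph])
  also have "\<dots> = fmor G n m phi"
  proof -
    have f1: "fdim (unitA :: 'k fctr) k = 1" for k unfolding unitA_def by simp
    have "nkron 1 1 (fmor G n m phi) (\<lambda>i j. if i = 0 \<and> j = 0 then 1 else 0) = fmor G n m phi"
      using nkron_unit_right[of "fmor G n m phi" 1] by simp
    thus ?thesis by (simp add: f1 fmor_unit_one0)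
  qed
  finally show "fmor (starBA Q q e 0 G unitA) n m phi = fmor G n m phi" .
qed

theorem theorem4p2:
  fixes Q q :: "'k::field"
  assumes "Q \<noteq> 0" and "q \<noteq> 0"
  shows
    \<comment> \<open>the unit object of AP_q\<close>
    "APobj q 0 (unitA :: 'k fctr)
     \<comment> \<open>* on objects: G * F is an object of P^{e+d}\<close>
     \<and> (\<forall>e d G F. Pobj Q q e G \<longrightarrow> APobj q d F \<longrightarrow> Pobj Q q (e + d) (starBA Q q e d G F))
     \<comment> \<open>* on morphisms: f * g is a natural transformation\<close>
     \<and> (\<forall>e d G G' F F' eta theta.
          Pobj Q q e G \<longrightarrow> Pobj Q q e G' \<longrightarrow> APobj q d F \<longrightarrow> APobj q d F' \<longrightarrow>
          nat_trans (HomB Q q e) G G' eta \<longrightarrow> nat_trans (HomA q d) F F' theta \<longrightarrow>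
          nat_trans (HomB Q q (e + d)) (starBA Q q e d G F) (starBA Q q e d G' F')
            (nt_kron F' F eta theta))
     \<comment> \<open>* preserves identities\<close>
     \<and> (\<forall>e d G F n. Pobj Q q e G \<longrightarrow> APobj q d F \<longrightarrow> 1 \<le> n \<longrightarrow>
          nt_kron F F (ntid G) (ntid F) n = ntid (starBA Q q e d G F) n)
     \<comment> \<open>condition (1): (f1 * g1)(f2 * g2) = (f1 f2) * (g1 g2)\<close>
     \<and> (\<forall>e d G1 G2 G3 F1 F2 F3 eta1 eta2 theta1 theta2 n.
          Pobj Q q e G1 \<longrightarrow> Pobj Q q e G2 \<longrightarrow> Pobj Q q e G3 \<longrightarrow>
          APobj q d F1 \<longrightarrow> APobj q d F2 \<longrightarrow> APobj q d F3 \<longrightarrow>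
          nat_trans (HomB Q q e) G2 G3 eta1 \<longrightarrow> nat_trans (HomB Q q e) G1 G2 eta2 \<longrightarrow>
          nat_trans (HomA q d) F2 F3 theta1 \<longrightarrow> nat_trans (HomA q d) F1 F2 theta2 \<longrightarrow> 1 \<le> n \<longrightarrow>
          ntcomp (starBA Q q e d G2 F2) (nt_kron F3 F2 eta1 theta1) (nt_kron F2 F1 eta2 theta2) n
          = nt_kron F3 F1 (ntcomp G2 eta1 eta2) (ntcomp F2 theta1 theta2) n)
     \<comment> \<open>condition (2) with lambda = identity: Y * (X1 \<otimes> X2) = (Y * X1) * X2 ...\<close>
     \<and> (\<forall>e d1 d2 G F1 F2. Pobj Q q e G \<longrightarrow> APobj q d1 F1 \<longrightarrow> APobj q d2 F2 \<longrightarrow>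
          feq (HomB Q q (e + d1 + d2)) (starBA Q q e (d1 + d2) G (tensorA q d1 d2 F1 F2))
              (starBA Q q (e + d1) d2 (starBA Q q e d1 G F1) F2))
     \<comment> \<open>... naturally in Y, X1, X2\<close>
     \<and> (\<forall>e d1 d2 G G' F1 F1' F2 F2' eta theta1 theta2 n.
          Pobj Q q e G \<longrightarrow> Pobj Q q e G' \<longrightarrow> APobj q d1 F1 \<longrightarrow> APobj q d1 F1' \<longrightarrow>
          APobj q d2 F2 \<longrightarrow> APobj q d2 F2' \<longrightarrow>
          nat_trans (HomB Q q e) G G' eta \<longrightarrow> nat_trans (HomA q d1) F1 F1' theta1 \<longrightarrow>
          nat_trans (HomA q d2) F2 F2' theta2 \<longrightarrow> 1 \<le> n \<longrightarrow>
          nt_kron (tensorA q d1 d2 F1' F2') (tensorA q d1 d2 F1 F2) eta (nt_kron F2' F2 theta1 theta2) n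
          = nt_kron F2' F2 (nt_kron F1' F1 eta theta1) theta2 n)
     \<comment> \<open>the associator a and left unitor l of AP_q are identities, so the coherence
         conditions in (2) and (3) hold with identity structure morphisms\<close>
     \<and> (\<forall>d1 d2 d3 F1 F2 F3. APobj q d1 F1 \<longrightarrow> APobj q d2 F2 \<longrightarrow> APobj q d3 F3 \<longrightarrow>
          feq (HomA q (d1 + d2 + d3)) (tensorA q d1 (d2 + d3) F1 (tensorA q d2 d3 F2 F3))
              (tensorA q (d1 + d2) d3 (tensorA q d1 d2 F1 F2) F3))
     \<and> (\<forall>d F. APobj q d F \<longrightarrow> feq (HomA q d) (tensorA q 0 d unitA F) F)
     \<comment> \<open>condition (3) with rho = identity: Y * 1 = Y, naturally in Y\<close>
     \<and> (\<forall>e G. Pobj Q q e G \<longrightarrow> feq (HomB Q q e) (starBA Q q e 0 G unitA) G)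
     \<and> (\<forall>e G G' eta n. Pobj Q q e G \<longrightarrow> Pobj Q q e G' \<longrightarrow> nat_trans (HomB Q q e) G G' eta \<longrightarrow>
          1 \<le> n \<longrightarrow> nt_kron unitA unitA eta (ntid unitA) n = eta n)"
proof -
  have c1: "APobj q 0 (unitA :: 'k fctr)" unfolding APobj_def by (rule unit_functor)
  have c2: "\<forall>e d G F. Pobj Q q e G \<longrightarrow> APobj q d F \<longrightarrow> Pobj Q q (e + d) (starBA Q q e d G F)"
  proof (intro allI impI)
    fix e d G F assume G: "Pobj Q q e G" and F: "APobj q d F"
    have G': "is_functor e (HomJ Q q e {0..<e}) G" using G unfolding Pobj_def HomB_def .
    have F': "is_functor d (HomA q d) F" using F unfolding APobj_def .
    show "Pobj Q q (e + d) (starBA Q q e d G F)"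
      unfolding Pobj_def starBA_def HomB_def using prod_functor[OF zero_le_one G' F'] by simp
  qed
  have c3: "\<forall>e d G G' F F' eta theta.
          Pobj Q q e G \<longrightarrow> Pobj Q q e G' \<longrightarrow> APobj q d F \<longrightarrow> APobj q d F' \<longrightarrow>
          nat_trans (HomB Q q e) G G' eta \<longrightarrow> nat_trans (HomA q d) F F' theta \<longrightarrow>
          nat_trans (HomB Q q (e + d)) (starBA Q q e d G F) (starBA Q q e d G' F')
            (nt_kron F' F eta theta)"
    unfolding Pobj_def APobj_def using nat_star by blast
  have c4: "\<forall>e d G F n. Pobj Q q e G \<longrightarrow> APobj q d F \<longrightarrow> 1 \<le> n \<longrightarrow>
          nt_kron F F (ntid G) (ntid F) n = ntid (starBA Q q e d G F) n"
    unfolding nt_kron_def ntid_def starBA_def fdim_prod by (simp add: nkron_nid)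
  have c5: "\<forall>e d G1 G2 G3 F1 F2 F3 eta1 eta2 theta1 theta2 n.
          Pobj Q q e G1 \<longrightarrow> Pobj Q q e G2 \<longrightarrow> Pobj Q q e G3 \<longrightarrow>
          APobj q d F1 \<longrightarrow> APobj q d F2 \<longrightarrow> APobj q d F3 \<longrightarrow>
          nat_trans (HomB Q q e) G2 G3 eta1 \<longrightarrow> nat_trans (HomB Q q e) G1 G2 eta2 \<longrightarrow>
          nat_trans (HomA q d) F2 F3 theta1 \<longrightarrow> nat_trans (HomA q d) F1 F2 theta2 \<longrightarrow> 1 \<le> n \<longrightarrow>
          ntcomp (starBA Q q e d G2 F2) (nt_kron F3 F2 eta1 theta1) (nt_kron F2 F1 eta2 theta2) n
          = nt_kron F3 F1 (ntcomp G2 eta1 eta2) (ntcomp F2 theta1 theta2) n"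
    unfolding ntcomp_def nt_kron_def starBA_def fdim_prod by (simp add: nkron_mixed)
  have c6: "\<forall>e d1 d2 G F1 F2. Pobj Q q e G \<longrightarrow> APobj q d1 F1 \<longrightarrow> APobj q d2 F2 \<longrightarrow>
          feq (HomB Q q (e + d1 + d2)) (starBA Q q e (d1 + d2) G (tensorA q d1 d2 F1 F2))
              (starBA Q q (e + d1) d2 (starBA Q q e d1 G F1) F2)"
  proof (intro allI impI)
    fix e d1 d2 G F1 F2 assume G: "Pobj Q q e G" and F1: "APobj q d1 F1" and F2: "APobj q d2 F2"
    have G': "is_functor e (HomJ Q q e {0..<e}) G" using G unfolding Pobj_def HomB_def .
    show "feq (HomB Q q (e + d1 + d2)) (starBA Q q e (d1 + d2) G (tensorA q d1 d2 F1 F2))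
              (starBA Q q (e + d1) d2 (starBA Q q e d1 G F1) F2)"
      unfolding starBA_def HomB_def
      using assoc_gen[OF zero_le_one G' F1[unfolded APobj_def] F2[unfolded APobj_def]] by simp
  qed
  have c7: "\<forall>e d1 d2 G G' F1 F1' F2 F2' eta theta1 theta2 n.
          Pobj Q q e G \<longrightarrow> Pobj Q q e G' \<longrightarrow> APobj q d1 F1 \<longrightarrow> APobj q d1 F1' \<longrightarrow>
          APobj q d2 F2 \<longrightarrow> APobj q d2 F2' \<longrightarrow>
          nat_trans (HomB Q q e) G G' eta \<longrightarrow> nat_trans (HomA q d1) F1 F1' theta1 \<longrightarrow>
          nat_trans (HomA q d2) F2 F2' theta2 \<longrightarrow> 1 \<le> n \<longrightarrow>
          nt_kron (tensorA q d1 d2 F1' F2') (tensorA q d1 d2 F1 F2) eta (nt_kron F2' F2 theta1 theta2) n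
          = nt_kron F2' F2 (nt_kron F1' F1 eta theta1) theta2 n"
    unfolding nt_kron_def tensorA_def fdim_prod by (simp add: nkron_assoc)
  have c8: "\<forall>d1 d2 d3 F1 F2 F3. APobj q d1 F1 \<longrightarrow> APobj q d2 F2 \<longrightarrow> APobj q d3 F3 \<longrightarrow>
          feq (HomA q (d1 + d2 + d3)) (tensorA q d1 (d2 + d3) F1 (tensorA q d2 d3 F2 F3))
              (tensorA q (d1 + d2) d3 (tensorA q d1 d2 F1 F2) F3)"
  proof (intro allI impI)
    fix d1 d2 d3 F1 F2 F3 assume F1: "APobj q d1 F1" and F2: "APobj q d2 F2" and F3: "APobj q d3 F3"
    have F1': "is_functor d1 (HomJ 1 q d1 {1..<d1}) F1" using F1 unfolding APobj_def HomA_def .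
    show "feq (HomA q (d1 + d2 + d3)) (tensorA q d1 (d2 + d3) F1 (tensorA q d2 d3 F2 F3))
              (tensorA q (d1 + d2) d3 (tensorA q d1 d2 F1 F2) F3)"
      using assoc_gen[OF order.refl F1' F2[unfolded APobj_def] F3[unfolded APobj_def]]
      unfolding tensorA_def HomA_def by simp
  qed
  have c9: "\<forall>d F. APobj q d F \<longrightarrow> feq (HomA q d) (tensorA q 0 d unitA F) F"
    unfolding APobj_def using left_unit by blast
  have c10: "\<forall>e G. Pobj Q q e G \<longrightarrow> feq (HomB Q q e) (starBA Q q e 0 G unitA) G"
    unfolding Pobj_def using right_unit by blast
  have c11: "\<forall>e G G' eta n. Pobj Q q e G \<longrightarrow> Pobj Q q e G' \<longrightarrow> nat_trans (HomB Q q e) G G' eta \<longrightarrow>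
          1 \<le> n \<longrightarrow> nt_kron unitA unitA eta (ntid unitA) n = eta n"
  proof -
    have u: "fdim (unitA :: 'k fctr) k = 1" for k unfolding unitA_def by simp
    have "nt_kron (unitA :: 'k fctr) unitA eta (ntid unitA) n = eta n" for eta n
      unfolding nt_kron_def ntid_def u by (rule nkron_nid1)
    thus ?thesis by blast
  qed
  show ?thesis using c1 c2 c3 c4 c5 c6 c7 c8 c9 c10 c11 by blast
qed

end
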